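(* The order function $\mathrm{Ord}$ (defined in the context) has the following properties. (1) $\mathrm{Ord}$, viewed as a function of the four endpoints of the two oriented segments (a function $\mathbb{R}^8\to\mathbb{R}$), is semi-algebraic. (2) $\mathrm{Ord}$ is continuous on the subdomain of pairs of oriented segments that do not intersect in their interiors. (3) Let $(e_1^n)_{n\ge1}$ and $(e_2^n)_{n\ge1}$ be sequences of oriented segments converging (endpoint-wise) to oriented segments $e_1$ and $e_2$ respectively, such that for every $n$, $e_1^n$ and $e_2^n$ do not intersect in their interiors ($e_1$ and $e_2$ themselves may intersect in their interiors). Then either $\mathrm{Ord}(e_1^n,e_2^n)\to \mathrm{Ord}(e_1,e_2)$, or the sequence $\mathrm{Ord}(e_1^n,e_2^n)$ has at most two accumulation points, namely $d$ and $-d$, where $d$ is the length of the overlap $e_1\cap e_2$.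
   Context: An oriented segment (edge) $e$ in $\mathbb{R}^2$ is given by an ordered pair of endpoints (possibly equal). For oriented segments $e_1,e_2$, choose coordinates in which the first endpoint of $e_1$ is the origin and $e_1$ runs from $(0,0)$ to $(l,0)$ along the positive $x$-axis, $l=\mathrm{len}(e_1)$. Define $d_+(e_1,e_2)=\mathrm{len}\{x\in[0,l] : \exists y\ge 0,\ (x,y)\in e_2\}$ and $d_-(e_1,e_2)=\mathrm{len}\{x\in[0,l] : \exists y\le 0,\ (x,y)\in e_2\}$ (len = one-dimensional Lebesgue measure; both are $0$ if $l=0$), i.e. $d_+$ is the length of the projection onto the segment $e_1$ of the part of $e_2$ lying on the left (nonnegative-$y$) side of $e_1$, and similarly for $d_-$. The order function is $\mathrm{Ord}(e_1,e_2)=d_+(e_1,e_2)-d_-(e_1,e_2)$. Two segments "do not intersect in their interiors" if their relative interiors are disjoint (they may touch at an endpoint of at least one of them, but may not cross or overlap along a positive length). *)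

theory Defs
  imports "HOL-Analysis.Analysis"
begin

type_synonym point = "real \<times> real"
type_synonym oseg = "point \<times> point"

definition seg_len :: "oseg \<Rightarrow> real" where
  "seg_len e = dist (fst e) (snd e)"

definition seg_set :: "oseg \<Rightarrow> point set" where
  "seg_set e = closed_segment (fst e) (snd e)"

text \<open>Coordinates of a point p in the frame where e1 runs from (0,0) to (l,0).\<close>
definition xcoord :: "oseg \<Rightarrow> point \<Rightarrow> real" where
  "xcoord e p = ((fst p - fst (fst e)) * (fst (snd e) - fst (fst e))
               + (snd p - snd (fst e)) * (snd (snd e) - snd (fst e))) / seg_len e"

definition ycoord :: "oseg \<Rightarrow> point \<Rightarrow> real" where
  "ycoord e p = ((fst (snd e) - fst (fst e)) * (snd p - snd (fst e))
               - (snd (snd e) - snd (fst e)) * (fst p - fst (fst e))) / seg_len e"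

definition d_plus :: "oseg \<Rightarrow> oseg \<Rightarrow> real" where
  "d_plus e1 e2 = (if seg_len e1 = 0 then 0 else
     measure lborel {x \<in> {0..seg_len e1}. \<exists>p \<in> seg_set e2. xcoord e1 p = x \<and> ycoord e1 p \<ge> 0})"

definition d_minus :: "oseg \<Rightarrow> oseg \<Rightarrow> real" where
  "d_minus e1 e2 = (if seg_len e1 = 0 then 0 else
     measure lborel {x \<in> {0..seg_len e1}. \<exists>p \<in> seg_set e2. xcoord e1 p = x \<and> ycoord e1 p \<le> 0})"

definition Ord :: "oseg \<Rightarrow> oseg \<Rightarrow> real" where
  "Ord e1 e2 = d_plus e1 e2 - d_minus e1 e2"

text \<open>Relative interiors disjoint (open_segment a a = {}).\<close>
definition no_interior_intersection :: "oseg \<Rightarrow> oseg \<Rightarrow> bool" where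
  "no_interior_intersection e1 e2 \<longleftrightarrow>
     open_segment (fst e1) (snd e1) \<inter> open_segment (fst e2) (snd e2) = {}"

text \<open>Multivariate real polynomial expressions, points of R^n as real lists of length n.\<close>
datatype mpoly = Var nat | Const real | Add mpoly mpoly | Mul mpoly mpoly | Neg mpoly

primrec mpeval :: "mpoly \<Rightarrow> real list \<Rightarrow> real" where
  "mpeval (Var i) xs = xs ! i"
| "mpeval (Const c) xs = c"
| "mpeval (Add p q) xs = mpeval p xs + mpeval q xs"
| "mpeval (Mul p q) xs = mpeval p xs * mpeval q xs"
| "mpeval (Neg p) xs = - mpeval p xs"

definition Rn :: "nat \<Rightarrow> real list set" where
  "Rn n = {xs. length xs = n}"

inductive semialgebraic :: "nat \<Rightarrow> real list set \<Rightarrow> bool" for n where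
  sa_zero: "semialgebraic n {xs \<in> Rn n. mpeval p xs = 0}"
| sa_pos: "semialgebraic n {xs \<in> Rn n. mpeval p xs > 0}"
| sa_union: "semialgebraic n A \<Longrightarrow> semialgebraic n B \<Longrightarrow> semialgebraic n (A \<union> B)"
| sa_inter: "semialgebraic n A \<Longrightarrow> semialgebraic n B \<Longrightarrow> semialgebraic n (A \<inter> B)"
| sa_compl: "semialgebraic n A \<Longrightarrow> semialgebraic n (Rn n - A)"

definition semialgebraic_fun :: "nat \<Rightarrow> (real list \<Rightarrow> real) \<Rightarrow> bool" where
  "semialgebraic_fun n f \<longleftrightarrow>
     semialgebraic (Suc n) {xs \<in> Rn (Suc n). xs ! n = f (take n xs)}"

definition Ord8 :: "real list \<Rightarrow> real" where
  "Ord8 xs = Ord ((xs!0, xs!1), (xs!2, xs!3)) ((xs!4, xs!5), (xs!6, xs!7))"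

definition overlap_len :: "oseg \<Rightarrow> oseg \<Rightarrow> real" where
  "overlap_len e1 e2 = diameter (seg_set e1 \<inter> seg_set e2)"

end

theory Submission
  imports Defs
begin


definition hh :: "real \<Rightarrow> real \<Rightarrow> real \<Rightarrow> real" where
  "hh lo hi l = max 0 (min hi l - max lo 0)"
definition ival :: "real \<Rightarrow> real \<Rightarrow> real \<Rightarrow> real" where
  "ival a b l = hh (min a b) (max a b) l"
definition cr :: "real \<Rightarrow> real \<Rightarrow> real \<Rightarrow> real \<Rightarrow> real" where
  "cr x1 y1 x2 y2 = x1 + y1 / (y1 - y2) * (x2 - x1)"
definition mp :: "real \<Rightarrow> real \<Rightarrow> real \<Rightarrow> real \<Rightarrow> real \<Rightarrow> real" where
  "mp x1 y1 x2 y2 l = (if 0 \<le> y1 then (if 0 \<le> y2 then ival x1 x2 l else ival x1 (cr x1 y1 x2 y2) l)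
       else (if 0 \<le> y2 then ival (cr x1 y1 x2 y2) x2 l else 0))"

lemma measure_ival: "measure lborel {x \<in> {0..l}. min a b \<le> x \<and> x \<le> max a b} = ival a b l"
proof -
  have e: "{x \<in> {0..l}. min a b \<le> x \<and> x \<le> max a b} = {max 0 (min a b) .. min l (max a b)}"
    by auto
  show ?thesis
  proof (cases "max 0 (min a b) \<le> min l (max a b)")
    case True
    then show ?thesis unfolding e ival_def hh_def by (simp add: min.commute max.commute)
  next
    case False
    have "min (max a b) l = min l (max a b)" "max (min a b) 0 = max 0 (min a b)"
      by (simp_all add: min.commute max.commute)
    then have "min (max a b) l - max (min a b) 0 < 0" using False by linarith
    moreover have "{max 0 (min a b) .. min l (max a b)} = {}" using False by simp
    ultimately show ?thesis unfolding e ival_def hh_def by simp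
  qed
qed

lemma seg_range:
  fixes x x1 x2 a b :: real
  assumes "a \<le> b"
  shows "(\<exists>u\<in>{a..b}. x = x1 + u*(x2-x1)) \<longleftrightarrow>
     min (x1 + a*(x2-x1)) (x1 + b*(x2-x1)) \<le> x \<and> x \<le> max (x1 + a*(x2-x1)) (x1 + b*(x2-x1))"
proof
  assume "\<exists>u\<in>{a..b}. x = x1 + u*(x2-x1)"
  then obtain u where u: "a \<le> u" "u \<le> b" "x = x1 + u*(x2-x1)" by auto
  show "min (x1 + a*(x2-x1)) (x1 + b*(x2-x1)) \<le> x \<and> x \<le> max (x1 + a*(x2-x1)) (x1 + b*(x2-x1))"
  proof (cases "x1 \<le> x2")
    case True
    then have "a*(x2-x1) \<le> u*(x2-x1)" "u*(x2-x1) \<le> b*(x2-x1)" using u by (auto intro: mult_right_mono)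
    then show ?thesis using u by auto
  next
    case False
    then have "a*(x2-x1) \<ge> u*(x2-x1)" "u*(x2-x1) \<ge> b*(x2-x1)" using u by (auto intro: mult_right_mono_neg)
    then show ?thesis using u by auto
  qed
next
  assume h: "min (x1 + a*(x2-x1)) (x1 + b*(x2-x1)) \<le> x \<and> x \<le> max (x1 + a*(x2-x1)) (x1 + b*(x2-x1))"
  show "\<exists>u\<in>{a..b}. x = x1 + u*(x2-x1)"
  proof (cases "x1 = x2")
    case True
    then show ?thesis using h assms by auto
  next
    case False
    define u where "u = (x - x1) / (x2 - x1)"
    have xu: "x = x1 + u*(x2-x1)" using False by (simp add: u_def)
    have "a \<le> u \<and> u \<le> b"
    proof (cases "x1 < x2")
      case True
      have "a*(x2-x1) \<le> u*(x2-x1)" "u*(x2-x1) \<le> b*(x2-x1)"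
        using h xu assms True by (auto simp: min_def max_def split: if_splits intro: mult_right_mono)
      then show ?thesis using True by (simp add: mult_le_cancel_right)
    next
      case False
      then have F: "x2 < x1" using \<open>x1 \<noteq> x2\<close> by auto
      have "a*(x2-x1) \<ge> u*(x2-x1)" "u*(x2-x1) \<ge> b*(x2-x1)"
        using h xu assms F by (auto simp: min_def max_def split: if_splits intro: mult_right_mono_neg)
      then show ?thesis using F by (simp add: mult_le_cancel_right)
    qed
    then show ?thesis using xu by auto
  qed
qed

lemma set_restrict:
  fixes a b :: real
  assumes "\<And>u. 0 \<le> u \<Longrightarrow> u \<le> 1 \<Longrightarrow> (0 \<le> y1+u*(y2-y1)) \<longleftrightarrow> (a \<le> u \<and> u \<le> b)"
    and "0 \<le> a" "a \<le> b" "b \<le> 1" "p = x1 + a*(x2-x1)" "q = x1 + b*(x2-x1)"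
  shows "{x\<in>{0..l}. \<exists>u\<in>{0..1}. x = x1+u*(x2-x1) \<and> 0 \<le> y1+u*(y2-y1)}
       = {x\<in>{0..l}. min p q \<le> x \<and> x \<le> max p q}"
proof -
  have "(\<exists>u\<in>{0..1}. x = x1+u*(x2-x1) \<and> 0 \<le> y1+u*(y2-y1)) \<longleftrightarrow> (\<exists>u\<in>{a..b}. x = x1 + u*(x2-x1))" for x
  proof
    assume "\<exists>u\<in>{0..1}. x = x1+u*(x2-x1) \<and> 0 \<le> y1+u*(y2-y1)"
    then obtain u where "u\<in>{0..1}" "x = x1+u*(x2-x1)" "0 \<le> y1+u*(y2-y1)" by blast
    then show "\<exists>u\<in>{a..b}. x = x1 + u*(x2-x1)" using assms(1)[of u] by auto
  next
    assume "\<exists>u\<in>{a..b}. x = x1 + u*(x2-x1)"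
    then obtain u where "u\<in>{a..b}" "x = x1+u*(x2-x1)" by blast
    then show "\<exists>u\<in>{0..1}. x = x1+u*(x2-x1) \<and> 0 \<le> y1+u*(y2-y1)" using assms(1)[of u] assms(2-4) by auto
  qed
  then show ?thesis using seg_range[OF assms(3)] assms(5,6) by simp
qed

lemma mp_measure:
  "measure lborel {x\<in>{0..l}. \<exists>u\<in>{0..1}. x = x1+u*(x2-x1) \<and> 0 \<le> y1+u*(y2-y1)} = mp x1 y1 x2 y2 l"
proof (cases "0 \<le> y1")
  case y1: True
  show ?thesis
  proof (cases "0 \<le> y2")
    case y2: True
    have yc: "0 \<le> y1+u*(y2-y1) \<longleftrightarrow> (0 \<le> u \<and> u \<le> 1)" if "0 \<le> u" "u \<le> 1" for u
    proof -
      have "y1+u*(y2-y1) = (1-u)*y1 + u*y2" by (simp add: algebra_simps)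
      also have "\<dots> \<ge> 0" using that y1 y2 by simp
      finally show ?thesis using that by simp
    qed
    have e: "{x\<in>{0..l}. \<exists>u\<in>{0..1}. x = x1+u*(x2-x1) \<and> 0 \<le> y1+u*(y2-y1)}
       = {x\<in>{0..l}. min x1 x2 \<le> x \<and> x \<le> max x1 x2}"
      by (rule set_restrict[of y1 y2 0 1]) (use yc in auto)
    show ?thesis using y1 y2 by (simp only: e measure_ival) (simp add: mp_def)
  next
    case y2: False
    define r where "r = y1 / (y1 - y2)"
    have d: "y1 - y2 > 0" using y1 y2 by simp
    have r0: "0 \<le> r" "r \<le> 1" using d y1 y2 by (auto simp: r_def divide_simps)
    have yc: "0 \<le> y1+u*(y2-y1) \<longleftrightarrow> (0 \<le> u \<and> u \<le> r)" if "0 \<le> u" "u \<le> 1" for u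
    proof -
      have yc: "0 \<le> y1+u*(y2-y1) \<longleftrightarrow> u*(y1-y2) \<le> y1" by (simp add: algebra_simps)
      also have "\<dots> \<longleftrightarrow> u \<le> r" using d by (simp add: r_def pos_le_divide_eq)
      finally show ?thesis using that by simp
    qed
    have e: "{x\<in>{0..l}. \<exists>u\<in>{0..1}. x = x1+u*(x2-x1) \<and> 0 \<le> y1+u*(y2-y1)}
       = {x\<in>{0..l}. min x1 (cr x1 y1 x2 y2) \<le> x \<and> x \<le> max x1 (cr x1 y1 x2 y2)}"
      by (rule set_restrict[of y1 y2 0 r]) (use yc r0 in \<open>auto simp: cr_def r_def\<close>)
    show ?thesis using y1 y2 by (simp only: e measure_ival) (simp add: mp_def)
  qed
next
  case y1: False
  show ?thesis
  proof (cases "0 \<le> y2")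
    case y2: True
    define r where "r = y1 / (y1 - y2)"
    have d: "y2 - y1 > 0" using y1 y2 by simp
    have rr: "r = (-y1) / (y2 - y1)" unfolding r_def by (simp add: divide_simps) (simp add: algebra_simps)
    have r0: "0 \<le> r" "r \<le> 1" using d y1 y2 by (auto simp: rr divide_simps)
    have yc: "0 \<le> y1+u*(y2-y1) \<longleftrightarrow> (r \<le> u \<and> u \<le> 1)" if "0 \<le> u" "u \<le> 1" for u
    proof -
      have yc: "0 \<le> y1+u*(y2-y1) \<longleftrightarrow> -y1 \<le> u*(y2-y1)" by (simp add: algebra_simps)
      also have "\<dots> \<longleftrightarrow> r \<le> u" using d by (simp only: rr pos_divide_le_eq)
      finally show ?thesis using that by simp
    qed
    have e: "{x\<in>{0..l}. \<exists>u\<in>{0..1}. x = x1+u*(x2-x1) \<and> 0 \<le> y1+u*(y2-y1)}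
       = {x\<in>{0..l}. min (cr x1 y1 x2 y2) x2 \<le> x \<and> x \<le> max (cr x1 y1 x2 y2) x2}"
      by (rule set_restrict[of y1 y2 r 1]) (use yc r0 in \<open>auto simp: cr_def r_def\<close>)
    show ?thesis using y1 y2 by (simp only: e measure_ival) (simp add: mp_def)
  next
    case y2: False
    have "\<not> (0 \<le> y1+u*(y2-y1))" if "0 \<le> u" "u \<le> 1" for u
    proof -
      have "y1+u*(y2-y1) = (1-u)*y1 + u*y2" by (simp add: algebra_simps)
      moreover have "(1-u)*y1 \<le> 0" using that y1 by (simp add: mult_nonneg_nonpos)
      moreover have "u*y2 \<le> 0" using that y2 by (simp add: mult_nonneg_nonpos)
      moreover have "(1-u)*y1 < 0 \<or> u*y2 < 0" using that y1 y2
        by (cases "u = 1") (auto simp: mult_pos_neg mult_neg_pos)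
      ultimately show ?thesis by linarith
    qed
    then have e: "{x\<in>{0..l}. \<exists>u\<in>{0..1}. x = x1+u*(x2-x1) \<and> 0 \<le> y1+u*(y2-y1)} = {}" by auto
    show ?thesis using y1 y2 by (simp only: e measure_empty) (simp add: mp_def)
  qed
qed

lemma div_affine: "(a + u*(b-a)) / (l::real) = a/l + u*(b/l - a/l)"
  by (cases "l = 0") (simp_all add: field_simps)

lemma xcoord_comb: "xcoord e ((1-u) *\<^sub>R P + u *\<^sub>R Q) = xcoord e P + u * (xcoord e Q - xcoord e P)"
proof -
  have "xcoord e ((1-u) *\<^sub>R P + u *\<^sub>R Q) =
    (((fst P - fst (fst e)) * (fst (snd e) - fst (fst e)) + (snd P - snd (fst e)) * (snd (snd e) - snd (fst e)))
     + u * (((fst Q - fst (fst e)) * (fst (snd e) - fst (fst e)) + (snd Q - snd (fst e)) * (snd (snd e) - snd (fst e)))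
       - ((fst P - fst (fst e)) * (fst (snd e) - fst (fst e)) + (snd P - snd (fst e)) * (snd (snd e) - snd (fst e))))) / seg_len e"
    unfolding xcoord_def by (simp add: algebra_simps)
  then show ?thesis unfolding div_affine by (simp add: xcoord_def)
qed

lemma ycoord_comb: "ycoord e ((1-u) *\<^sub>R P + u *\<^sub>R Q) = ycoord e P + u * (ycoord e Q - ycoord e P)"
proof -
  have "ycoord e ((1-u) *\<^sub>R P + u *\<^sub>R Q) =
    (((fst (snd e) - fst (fst e)) * (snd P - snd (fst e)) - (snd (snd e) - snd (fst e)) * (fst P - fst (fst e)))
     + u * (((fst (snd e) - fst (fst e)) * (snd Q - snd (fst e)) - (snd (snd e) - snd (fst e)) * (fst Q - fst (fst e)))
       - ((fst (snd e) - fst (fst e)) * (snd P - snd (fst e)) - (snd (snd e) - snd (fst e)) * (fst P - fst (fst e))))) / seg_len e"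
    unfolding ycoord_def by (simp add: algebra_simps)
  then show ?thesis unfolding div_affine by (simp add: ycoord_def)
qed

definition ordf :: "real \<Rightarrow> real \<Rightarrow> real \<Rightarrow> real \<Rightarrow> real \<Rightarrow> real" where
  "ordf x1 y1 x2 y2 l = mp x1 y1 x2 y2 l - mp x1 (-y1) x2 (-y2) l"

abbreviation "X1 e1 e2 \<equiv> xcoord e1 (fst e2)"
abbreviation "Y1 e1 e2 \<equiv> ycoord e1 (fst e2)"
abbreviation "X2 e1 e2 \<equiv> xcoord e1 (snd e2)"
abbreviation "Y2 e1 e2 \<equiv> ycoord e1 (snd e2)"

lemma seg_param: "(\<exists>p\<in>seg_set e2. Q p) \<longleftrightarrow> (\<exists>u\<in>{0..1}. Q ((1-u) *\<^sub>R fst e2 + u *\<^sub>R snd e2))"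
proof
  assume "\<exists>p\<in>seg_set e2. Q p"
  then obtain p where "p \<in> closed_segment (fst e2) (snd e2)" "Q p" unfolding seg_set_def by blast
  then show "\<exists>u\<in>{0..1}. Q ((1-u) *\<^sub>R fst e2 + u *\<^sub>R snd e2)" unfolding in_segment(1) by auto
next
  assume "\<exists>u\<in>{0..1}. Q ((1-u) *\<^sub>R fst e2 + u *\<^sub>R snd e2)"
  then obtain u where "u \<in> {0..1}" "Q ((1-u) *\<^sub>R fst e2 + u *\<^sub>R snd e2)" by blast
  moreover have "(1-u) *\<^sub>R fst e2 + u *\<^sub>R snd e2 \<in> seg_set e2"
    unfolding seg_set_def in_segment(1) using \<open>u \<in> {0..1}\<close> by auto
  ultimately show "\<exists>p\<in>seg_set e2. Q p" by blast
qed

lemma d_plus_eq: "seg_len e1 \<noteq> 0 \<Longrightarrow>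
   d_plus e1 e2 = mp (X1 e1 e2) (Y1 e1 e2) (X2 e1 e2) (Y2 e1 e2) (seg_len e1)"
  unfolding d_plus_def seg_param xcoord_comb ycoord_comb
  by (simp add: mp_measure[symmetric] eq_commute[of _ "xcoord _ _ + _"])

lemma d_minus_eq: "seg_len e1 \<noteq> 0 \<Longrightarrow>
   d_minus e1 e2 = mp (X1 e1 e2) (- Y1 e1 e2) (X2 e1 e2) (- Y2 e1 e2) (seg_len e1)"
proof -
  assume "seg_len e1 \<noteq> 0"
  have "(y1 + u*(y2-y1) \<le> 0) \<longleftrightarrow> (0 \<le> -y1 + u*(-y2 - -y1))" for y1 y2 u :: real
    by (simp add: algebra_simps)
  then show ?thesis using \<open>seg_len e1 \<noteq> 0\<close>
  unfolding d_minus_def seg_param xcoord_comb ycoord_comb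
  by (simp add: mp_measure[symmetric] eq_commute[of _ "xcoord _ _ + _"])
qed

lemma Ord_eq: "seg_len e1 \<noteq> 0 \<Longrightarrow>
   Ord e1 e2 = ordf (X1 e1 e2) (Y1 e1 e2) (X2 e1 e2) (Y2 e1 e2) (seg_len e1)"
  by (simp add: Ord_def ordf_def d_plus_eq d_minus_eq)

lemma Ord_len0: "seg_len e1 = 0 \<Longrightarrow> Ord e1 e2 = 0"
  by (simp add: Ord_def d_plus_def d_minus_def)




lemma ival_tendsto:
  "(a \<longlongrightarrow> A) F \<Longrightarrow> (b \<longlongrightarrow> B) F \<Longrightarrow> (c \<longlongrightarrow> C) F \<Longrightarrow>
   ((\<lambda>i. ival (a i) (b i) (c i)) \<longlongrightarrow> ival A B C) F"
  unfolding ival_def hh_def by (intro tendsto_intros)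

lemma cr_tendsto:
  "(a \<longlongrightarrow> A) F \<Longrightarrow> (b \<longlongrightarrow> B) F \<Longrightarrow> (c \<longlongrightarrow> C) F \<Longrightarrow> (d \<longlongrightarrow> D) F \<Longrightarrow> B \<noteq> D \<Longrightarrow>
   ((\<lambda>i. cr (a i) (b i) (c i) (d i)) \<longlongrightarrow> cr A B C D) F"
  unfolding cr_def by (intro tendsto_intros) auto

lemma ival_same: "ival a a l = 0"
  by (simp add: ival_def hh_def)

lemma tendsto_if_both:
  "(f \<longlongrightarrow> L) F \<Longrightarrow> (g \<longlongrightarrow> L) F \<Longrightarrow> ((\<lambda>i. if P i then f i else g i) \<longlongrightarrow> L) F"
  by (rule filterlim_If) (auto intro: tendsto_mono[OF inf_le1])

lemma tendsto_if_sign: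
  fixes g :: "'i \<Rightarrow> real"
  assumes g: "(g \<longlongrightarrow> y) F"
    and p: "y > 0 \<Longrightarrow> (f \<longlongrightarrow> L) F"
    and n: "y < 0 \<Longrightarrow> (h \<longlongrightarrow> L) F"
    and z: "y = 0 \<Longrightarrow> (f \<longlongrightarrow> L) F \<and> (h \<longlongrightarrow> L) F"
  shows "((\<lambda>i. if 0 \<le> g i then f i else h i) \<longlongrightarrow> L) F"
proof -
  consider "y > 0" | "y < 0" | "y = 0" by linarith
  then show ?thesis
  proof cases
    case 1
    then have "eventually (\<lambda>i. g i > 0) F" using g by (simp add: order_tendstoD(1))
    then have "eventually (\<lambda>i. (if 0 \<le> g i then f i else h i) = f i) F"
      by (rule eventually_mono) auto
    then show ?thesis by (subst tendsto_cong) (auto intro: p[OF 1])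
  next
    case 2
    then have "eventually (\<lambda>i. g i < 0) F" using g by (simp add: order_tendstoD(2))
    then have "eventually (\<lambda>i. (if 0 \<le> g i then f i else h i) = h i) F"
      by (rule eventually_mono) auto
    then show ?thesis by (subst tendsto_cong) (auto intro: n[OF 2])
  next
    case 3
    then show ?thesis using z by (auto intro: tendsto_if_both)
  qed
qed

lemma mp_tendsto:
  fixes f1 g1 f2 g2 h :: "'i \<Rightarrow> real"
  assumes f1: "(f1 \<longlongrightarrow> x1) F" and g1: "(g1 \<longlongrightarrow> y1) F" and f2: "(f2 \<longlongrightarrow> x2) F"
    and g2: "(g2 \<longlongrightarrow> y2) F" and h: "(h \<longlongrightarrow> l) F" and nz: "\<not> (y1 = 0 \<and> y2 = 0)"
  shows "((\<lambda>i. mp (f1 i) (g1 i) (f2 i) (g2 i) (h i)) \<longlongrightarrow> mp x1 y1 x2 y2 l) F"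
proof -
  have e: "(\<lambda>i. mp (f1 i) (g1 i) (f2 i) (g2 i) (h i)) = (\<lambda>i. if 0 \<le> g1 i then (if 0 \<le> g2 i then ival (f1 i) (f2 i) (h i) else ival (f1 i) (cr (f1 i) (g1 i) (f2 i) (g2 i)) (h i))
       else (if 0 \<le> g2 i then ival (cr (f1 i) (g1 i) (f2 i) (g2 i)) (f2 i) (h i) else 0))"
    by (rule ext) (simp add: mp_def)
  show ?thesis
proof (cases "y1 = y2")
  case True
  then have ne: "y1 \<noteq> 0" using nz by auto
  show ?thesis unfolding e
  proof (rule tendsto_if_sign[OF g1])
    assume "y1 > 0"
    then show "((\<lambda>i. if 0 \<le> g2 i then ival (f1 i) (f2 i) (h i) else ival (f1 i) (cr (f1 i) (g1 i) (f2 i) (g2 i)) (h i))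
      \<longlongrightarrow> mp x1 y1 x2 y2 l) F"
      using True by (intro tendsto_if_sign[OF g2]) (auto simp: mp_def intro: ival_tendsto f1 f2 h)
  next
    assume "y1 < 0"
    then show "((\<lambda>i. if 0 \<le> g2 i then ival (cr (f1 i) (g1 i) (f2 i) (g2 i)) (f2 i) (h i) else 0)
      \<longlongrightarrow> mp x1 y1 x2 y2 l) F"
      using True by (intro tendsto_if_sign[OF g2]) (auto simp: mp_def)
  qed (use ne in auto)
next
  case False
  have A: "((\<lambda>i. ival (f1 i) (f2 i) (h i)) \<longlongrightarrow> ival x1 x2 l) F"
    by (intro ival_tendsto f1 f2 h)
  have c: "((\<lambda>i. cr (f1 i) (g1 i) (f2 i) (g2 i)) \<longlongrightarrow> cr x1 y1 x2 y2) F"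
    by (intro cr_tendsto f1 f2 g1 g2 False)
  have B: "((\<lambda>i. ival (f1 i) (cr (f1 i) (g1 i) (f2 i) (g2 i)) (h i)) \<longlongrightarrow> ival x1 (cr x1 y1 x2 y2) l) F"
    by (intro ival_tendsto f1 c h)
  have C: "((\<lambda>i. ival (cr (f1 i) (g1 i) (f2 i) (g2 i)) (f2 i) (h i)) \<longlongrightarrow> ival (cr x1 y1 x2 y2) x2 l) F"
    by (intro ival_tendsto f2 c h)
  have cr0: "y1 = 0 \<Longrightarrow> cr x1 y1 x2 y2 = x1" by (simp add: cr_def)
  have cr1: "y2 = 0 \<Longrightarrow> y1 \<noteq> 0 \<Longrightarrow> cr x1 y1 x2 y2 = x2" by (simp add: cr_def)
  show ?thesis unfolding e
  proof (rule tendsto_if_sign[OF g1])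
    assume "y1 > 0"
    then show "((\<lambda>i. if 0 \<le> g2 i then ival (f1 i) (f2 i) (h i) else ival (f1 i) (cr (f1 i) (g1 i) (f2 i) (g2 i)) (h i))
      \<longlongrightarrow> mp x1 y1 x2 y2 l) F"
      using A B cr1 by (intro tendsto_if_sign[OF g2]) (auto simp: mp_def)
  next
    assume "y1 < 0"
    then show "((\<lambda>i. if 0 \<le> g2 i then ival (cr (f1 i) (g1 i) (f2 i) (g2 i)) (f2 i) (h i) else 0)
      \<longlongrightarrow> mp x1 y1 x2 y2 l) F"
      using C cr1 by (intro tendsto_if_sign[OF g2]) (auto simp: mp_def ival_same)
  next
    assume y10: "y1 = 0"
    then have y2: "y2 \<noteq> 0" using nz by auto
    show "((\<lambda>i. if 0 \<le> g2 i then ival (f1 i) (f2 i) (h i) else ival (f1 i) (cr (f1 i) (g1 i) (f2 i) (g2 i)) (h i))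
      \<longlongrightarrow> mp x1 y1 x2 y2 l) F \<and>
      ((\<lambda>i. if 0 \<le> g2 i then ival (cr (f1 i) (g1 i) (f2 i) (g2 i)) (f2 i) (h i) else 0)
      \<longlongrightarrow> mp x1 y1 x2 y2 l) F"
      using A B C cr0[OF y10] y10 y2 
      by (intro conjI tendsto_if_sign[OF g2]) (auto simp: mp_def ival_same)
  qed
qed

qed




lemma seg_len_sq: "(seg_len e)^2 = (fst (snd e) - fst (fst e))^2 + (snd (snd e) - snd (fst e))^2"
proof -
  have "seg_len e = sqrt ((fst (fst e) - fst (snd e))^2 + (snd (fst e) - snd (snd e))^2)"
    unfolding seg_len_def by (cases "fst e"; cases "snd e") (simp add: dist_Pair_Pair dist_real_def)
  then show ?thesis by (simp add: power2_commute)
qed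

lemma recon:
  assumes l: "seg_len e > 0" and y: "ycoord e p = 0"
  shows "p = fst e + (xcoord e p / seg_len e) *\<^sub>R (snd e - fst e)"
proof -
  obtain a1 a2 b1 b2 where e: "e = ((a1,a2),(b1,b2))" by (metis prod.collapse)
  obtain p1 p2 where p: "p = (p1,p2)" by (metis prod.collapse)
  define L where "L = seg_len e"
  have L2: "L^2 = (b1-a1)^2 + (b2-a2)^2" using seg_len_sq[of e] by (simp add: L_def e)
  have Lp: "L > 0" using l by (simp add: L_def)
  have Lp': "seg_len ((a1,a2),(b1,b2)) \<noteq> 0" using l e by simp
  have yy: "(b1-a1)*(p2-a2) = (b2-a2)*(p1-a1)" using y Lp' by (simp add: ycoord_def e p)
  have xx: "xcoord e p = ((p1-a1)*(b1-a1) + (p2-a2)*(b2-a2)) / L" by (simp add: xcoord_def e p L_def)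
  have c1: "p1 = a1 + ((p1-a1)*(b1-a1) + (p2-a2)*(b2-a2)) / L / L * (b1 - a1)"
  proof -
    have "((p1-a1)*(b1-a1) + (p2-a2)*(b2-a2)) * (b1 - a1) = (p1-a1)*(b1-a1)^2 + (b2-a2)*((b1-a1)*(p2-a2))"
      by (simp add: algebra_simps power2_eq_square)
    also have "\<dots> = (p1 - a1) * L^2" unfolding yy L2 by (simp add: algebra_simps power2_eq_square)
    finally have h: "((p1-a1)*(b1-a1) + (p2-a2)*(b2-a2)) * (b1 - a1) = (p1 - a1) * L^2" .
    have "((p1-a1)*(b1-a1) + (p2-a2)*(b2-a2)) / L / L * (b1 - a1) = (p1 - a1) * L^2 / (L*L)"
      by (simp add: h[symmetric])
    also have "\<dots> = p1 - a1" using Lp by (simp add: power2_eq_square)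
    finally show ?thesis by simp
  qed
  have c2: "p2 = a2 + ((p1-a1)*(b1-a1) + (p2-a2)*(b2-a2)) / L / L * (b2 - a2)"
  proof -
    have "((p1-a1)*(b1-a1) + (p2-a2)*(b2-a2)) * (b2 - a2) = (b1-a1)*((b2-a2)*(p1-a1)) + (p2-a2)*(b2-a2)^2"
      by (simp add: algebra_simps power2_eq_square)
    also have "\<dots> = (p2 - a2) * L^2" unfolding yy[symmetric] L2 by (simp add: algebra_simps power2_eq_square)
    finally have h: "((p1-a1)*(b1-a1) + (p2-a2)*(b2-a2)) * (b2 - a2) = (p2 - a2) * L^2" .
    have "((p1-a1)*(b1-a1) + (p2-a2)*(b2-a2)) / L / L * (b2 - a2) = (p2 - a2) * L^2 / (L*L)"
      by (simp add: h[symmetric])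
    also have "\<dots> = p2 - a2" using Lp by (simp add: power2_eq_square)
    finally show ?thesis by simp
  qed
  have sx: "xcoord e p / seg_len e = ((p1-a1)*(b1-a1) + (p2-a2)*(b2-a2)) / L / L" using xx by (simp add: L_def)
  have "fst e + (xcoord e p / seg_len e) *\<^sub>R (snd e - fst e) =
     (a1 + ((p1-a1)*(b1-a1) + (p2-a2)*(b2-a2)) / L / L * (b1 - a1), a2 + ((p1-a1)*(b1-a1) + (p2-a2)*(b2-a2)) / L / L * (b2 - a2))"
    unfolding sx by (simp add: e)
  then show ?thesis using c1 c2 by (simp add: p)
qed

lemma in_open_e1:
  assumes l: "seg_len e > 0" and y: "ycoord e p = 0" and x: "0 < xcoord e p" "xcoord e p < seg_len e"
  shows "p \<in> open_segment (fst e) (snd e)"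
proof -
  define s where "s = xcoord e p / seg_len e"
  have s: "0 < s" "s < 1" using l x by (simp_all add: s_def field_simps)
  have ne: "fst e \<noteq> snd e" using l by (auto simp: seg_len_def)
  have "p = (1 - s) *\<^sub>R fst e + s *\<^sub>R snd e"
    using recon[OF l y] by (simp add: s_def[symmetric] algebra_simps)
  then show ?thesis unfolding in_segment(2) using s ne by blast
qed

lemma crossing_contra:
  assumes l: "seg_len e1 > 0" and nii: "no_interior_intersection e1 e2"
    and u: "0 < u" "u < 1" and ne: "fst e2 \<noteq> snd e2"
    and y: "Y1 e1 e2 + u * (Y2 e1 e2 - Y1 e1 e2) = 0"
    and x: "0 < X1 e1 e2 + u * (X2 e1 e2 - X1 e1 e2)" "X1 e1 e2 + u * (X2 e1 e2 - X1 e1 e2) < seg_len e1"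
  shows False
proof -
  define p where "p = (1-u) *\<^sub>R fst e2 + u *\<^sub>R snd e2"
  have "p \<in> open_segment (fst e2) (snd e2)" unfolding in_segment(2) p_def using u ne by blast
  moreover have "p \<in> open_segment (fst e1) (snd e1)"
    by (rule in_open_e1[OF l]) (use y x in \<open>simp_all add: p_def xcoord_comb ycoord_comb\<close>)
  ultimately show False using nii unfolding no_interior_intersection_def by blast
qed




lemma ival_bounds: "0 \<le> l \<Longrightarrow> 0 \<le> ival a b l \<and> ival a b l \<le> l"
  by (simp add: ival_def hh_def)

lemma mp_bounds: "0 \<le> l \<Longrightarrow> 0 \<le> mp x1 y1 x2 y2 l \<and> mp x1 y1 x2 y2 l \<le> l"
  by (simp add: mp_def ival_bounds)

lemma ordf_abs_le: "0 \<le> l \<Longrightarrow> \<bar>ordf x1 y1 x2 y2 l\<bar> \<le> l"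
  using mp_bounds[of l x1 y1 x2 y2] mp_bounds[of l x1 "-y1" x2 "-y2"] by (simp add: ordf_def abs_if)

lemma ordf_zero: "ordf x1 0 x2 0 l = 0"
  by (simp add: ordf_def mp_def)

lemma cr_neg: "cr x1 (-y1) x2 (-y2) = cr x1 y1 x2 y2"
proof -
  have "(-y1) / (-y1 - -y2) = y1 / (y1 - y2)"
    by (metis minus_diff_eq minus_divide_divide diff_minus_eq_add uminus_add_conv_diff)
  then show ?thesis by (simp add: cr_def)
qed

lemma ival_split:
  assumes "c = x1 + r*(x2-x1)" "0 \<le> r" "r \<le> 1" "c \<le> 0 \<or> l \<le> c" "0 \<le> l"
  shows "\<bar>ival x1 c l - ival c x2 l\<bar> = ival x1 x2 l"
proof (cases "x1 \<le> x2")
  case True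
  have "r*(x2-x1) \<ge> 0" "r*(x2-x1) \<le> x2 - x1" using assms True
    by (simp_all add: mult_left_le_one_le mult_nonneg_nonneg)
  then have "x1 \<le> c" "c \<le> x2" using assms by auto
  then show ?thesis using assms(4,5) True by (auto simp: ival_def hh_def min_def max_def)
next
  case False
  have "r*(x1-x2) \<ge> 0" "r*(x1-x2) \<le> x1 - x2" using assms False
    by (simp_all add: mult_left_le_one_le mult_nonneg_nonneg)
  then have "x2 \<le> c" "c \<le> x1" using assms by (auto simp: algebra_simps)
  then show ?thesis using assms(4,5) False by (auto simp: ival_def hh_def min_def max_def)
qed

lemma ordf_abs:
  assumes nz: "\<not> (y1 = 0 \<and> y2 = 0)" and cx: "y1 * y2 < 0 \<Longrightarrow> cr x1 y1 x2 y2 \<le> 0 \<or> l \<le> cr x1 y1 x2 y2"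
    and l: "0 \<le> l"
  shows "\<bar>ordf x1 y1 x2 y2 l\<bar> = ival x1 x2 l"
proof -
  have c0: "cr x1 0 x2 y2 = x1" for y2 by (simp add: cr_def)
  have c1: "y1 \<noteq> 0 \<Longrightarrow> cr x1 y1 x2 0 = x2" by (simp add: cr_def)
  consider "0 \<le> y1" "0 \<le> y2" | "y1 \<le> 0" "y2 \<le> 0" | "y1 > 0" "y2 < 0" | "y1 < 0" "y2 > 0" by linarith
  then show ?thesis
  proof cases
    case 1
    then have "mp x1 (-y1) x2 (-y2) l = 0" using nz c1 cr_neg[of x1 y1 x2 y2]
      by (cases "y1 = 0") (auto simp: mp_def c0 ival_same)
    then show ?thesis using 1 ival_bounds[OF l] by (simp add: ordf_def mp_def)
  next
    case 2
    then have "mp x1 y1 x2 y2 l = 0" using nz c1 c0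
      by (cases "y1 = 0") (auto simp: mp_def ival_same)
    then show ?thesis using 2 ival_bounds[OF l] by (simp add: ordf_def mp_def)
  next
    case 3
    define r where "r = y1 / (y1 - y2)"
    have r: "0 \<le> r" "r \<le> 1" using 3 by (auto simp: r_def divide_simps)
    have "y1 * y2 < 0" using 3 by (simp add: mult_pos_neg)
    then have "\<bar>ival x1 (cr x1 y1 x2 y2) l - ival (cr x1 y1 x2 y2) x2 l\<bar> = ival x1 x2 l"
      using cx r l by (intro ival_split[of _ x1 r x2]) (auto simp: cr_def r_def)
    then show ?thesis using 3 by (simp add: ordf_def mp_def cr_neg)
  next
    case 4
    define r where "r = y1 / (y1 - y2)"
    have rr: "r = (-y1) / (y2 - y1)" unfolding r_def by (simp add: divide_simps) (simp add: algebra_simps)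
    have r: "0 \<le> r" "r \<le> 1" using 4 by (auto simp: rr divide_simps)
    have "y1 * y2 < 0" using 4 by (simp add: mult_neg_pos)
    then have "\<bar>ival x1 (cr x1 y1 x2 y2) l - ival (cr x1 y1 x2 y2) x2 l\<bar> = ival x1 x2 l"
      using cx r l by (intro ival_split[of _ x1 r x2]) (auto simp: cr_def r_def)
    then show ?thesis using 4 by (simp add: ordf_def mp_def cr_neg abs_minus_commute)
  qed
qed




lemma dom_cross:
  assumes l: "seg_len e1 > 0" and nii: "no_interior_intersection e1 e2"
    and y: "Y1 e1 e2 * Y2 e1 e2 < 0"
  shows "cr (X1 e1 e2) (Y1 e1 e2) (X2 e1 e2) (Y2 e1 e2) \<le> 0 \<or> seg_len e1 \<le> cr (X1 e1 e2) (Y1 e1 e2) (X2 e1 e2) (Y2 e1 e2)"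
proof (rule ccontr)
  assume c: "\<not> ?thesis"
  define y1 where "y1 = Y1 e1 e2"
  define y2 where "y2 = Y2 e1 e2"
  define r where "r = y1 / (y1 - y2)"
  have yy: "y1 * y2 < 0" using y by (simp add: y1_def y2_def)
  have ne: "fst e2 \<noteq> snd e2" using yy by (auto simp: y1_def y2_def)
  have d: "y1 - y2 \<noteq> 0" using yy by auto
  have r: "0 < r \<and> r < 1"
  proof (cases "y1 > 0")
    case True
    then have "y2 < 0" using yy by (simp add: zero_less_mult_iff mult_less_0_iff)
    then show ?thesis using True by (simp add: r_def divide_simps)
  next
    case False
    then have "y1 < 0" "y2 > 0" using yy by (auto simp: mult_less_0_iff)
    then show ?thesis by (simp add: r_def divide_simps)
  qed
  have y0: "y1 + r * (y2 - y1) = 0"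
  proof -
    have "r * (y2 - y1) = - y1" using d unfolding r_def by (simp add: divide_simps) (simp add: algebra_simps)
    then show ?thesis by simp
  qed
  have "cr (X1 e1 e2) y1 (X2 e1 e2) y2 = X1 e1 e2 + r * (X2 e1 e2 - X1 e1 e2)"
    by (simp add: cr_def r_def)
  then show False
    using crossing_contra[OF l nii _ _ ne, of r] r y0 c by (simp add: y1_def y2_def)
qed

lemma dom_flat:
  assumes l: "seg_len e1 > 0" and nii: "no_interior_intersection e1 e2"
    and y: "Y1 e1 e2 = 0" "Y2 e1 e2 = 0"
  shows "ival (X1 e1 e2) (X2 e1 e2) (seg_len e1) = 0"
proof (rule ccontr)
  assume c: "\<not> ?thesis"
  define x1 where "x1 = X1 e1 e2"
  define x2 where "x2 = X2 e1 e2"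
  define L where "L = seg_len e1"
  define lo where "lo = max (min x1 x2) 0"
  define hi where "hi = min (max x1 x2) L"
  have "ival x1 x2 L \<noteq> 0" using c by (simp add: x1_def x2_def L_def)
  then have lohi: "lo < hi" unfolding ival_def hh_def lo_def hi_def by (auto simp: max_def min_def split: if_splits)
  define xs where "xs = (lo + hi) / 2"
  have xs: "lo < xs" "xs < hi" using lohi by (simp_all add: xs_def)
  have x12: "x1 \<noteq> x2" using lohi by (auto simp: lo_def hi_def)
  then have ne: "fst e2 \<noteq> snd e2" by (auto simp: x1_def x2_def)
  define u where "u = (xs - x1) / (x2 - x1)"
  have xu: "x1 + u * (x2 - x1) = xs" using x12 by (simp add: u_def)
  have u: "0 < u \<and> u < 1"
  proof (cases "x1 < x2")
    case True
    then have "x1 < xs" "xs < x2" using xs by (auto simp: lo_def hi_def)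
    then show ?thesis using True by (simp add: u_def divide_simps)
  next
    case False
    then have "x2 < xs" "xs < x1" using xs x12 by (auto simp: lo_def hi_def)
    then show ?thesis using False x12 by (auto simp: u_def divide_simps)
  qed
  have "0 < xs" "xs < L" using xs by (auto simp: lo_def hi_def)
  then show False
    using crossing_contra[OF l nii _ _ ne, of u] u xu y by (simp add: x1_def x2_def L_def)
qed

lemma dom_abs:
  assumes l: "seg_len e1 > 0" and nii: "no_interior_intersection e1 e2"
  shows "\<bar>Ord e1 e2\<bar> = ival (X1 e1 e2) (X2 e1 e2) (seg_len e1)"
proof (cases "Y1 e1 e2 = 0 \<and> Y2 e1 e2 = 0")
  case True
  then show ?thesis using dom_flat[OF l nii] l by (simp add: Ord_eq ordf_zero)
next
  case False
  show ?thesis unfolding Ord_eq[OF l[THEN less_imp_neq, symmetric]]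
    by (rule ordf_abs[OF False dom_cross[OF l nii]]) (use l in auto)
qed




lemma Ord_abs_le: "\<bar>Ord e1 e2\<bar> \<le> seg_len e1"
proof (cases "seg_len e1 = 0")
  case True then show ?thesis by (simp add: Ord_len0)
next
  case False
  have "0 \<le> seg_len e1" by (simp add: seg_len_def)
  then show ?thesis using False by (simp add: Ord_eq ordf_abs_le)
qed

context
  fixes E1 E2 :: "'i \<Rightarrow> oseg" and F :: "'i filter" and e1 e2 :: oseg
  assumes t1: "(E1 \<longlongrightarrow> e1) F" and t2: "(E2 \<longlongrightarrow> e2) F"
begin

lemma len_t: "((\<lambda>i. seg_len (E1 i)) \<longlongrightarrow> seg_len e1) F"
  unfolding seg_len_def by (intro tendsto_intros t1)

lemma xc_t:
  assumes "seg_len e1 \<noteq> 0" and pt: "(P \<longlongrightarrow> p) F"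
  shows "((\<lambda>i. xcoord (E1 i) (P i)) \<longlongrightarrow> xcoord e1 p) F"
  unfolding xcoord_def by (intro tendsto_intros t1 pt len_t assms(1))

lemma yc_t:
  assumes "seg_len e1 \<noteq> 0" and pt: "(P \<longlongrightarrow> p) F"
  shows "((\<lambda>i. ycoord (E1 i) (P i)) \<longlongrightarrow> ycoord e1 p) F"
  unfolding ycoord_def by (intro tendsto_intros t1 pt len_t assms(1))

lemma ev_len_pos: "seg_len e1 > 0 \<Longrightarrow> eventually (\<lambda>i. seg_len (E1 i) > 0) F"
  using len_t by (rule order_tendstoD(1))

lemma ord_t_len0:
  assumes "seg_len e1 = 0"
  shows "((\<lambda>i. Ord (E1 i) (E2 i)) \<longlongrightarrow> Ord e1 e2) F"
proof -
  have "((\<lambda>i. seg_len (E1 i)) \<longlongrightarrow> 0) F" using len_t assms by simp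
  then have "((\<lambda>i. Ord (E1 i) (E2 i)) \<longlongrightarrow> 0) F"
    by (rule Lim_null_comparison[rotated]) (simp add: Ord_abs_le)
  then show ?thesis using assms by (simp add: Ord_len0)
qed

lemma ord_t_good:
  assumes l: "seg_len e1 > 0" and nz: "\<not> (Y1 e1 e2 = 0 \<and> Y2 e1 e2 = 0)"
  shows "((\<lambda>i. Ord (E1 i) (E2 i)) \<longlongrightarrow> Ord e1 e2) F"
proof -
  have l0: "seg_len e1 \<noteq> 0" using l by simp
  have a: "((\<lambda>i. X1 (E1 i) (E2 i)) \<longlongrightarrow> X1 e1 e2) F" by (intro xc_t l0 tendsto_intros t2)
  have b: "((\<lambda>i. Y1 (E1 i) (E2 i)) \<longlongrightarrow> Y1 e1 e2) F" by (intro yc_t l0 tendsto_intros t2)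
  have c: "((\<lambda>i. X2 (E1 i) (E2 i)) \<longlongrightarrow> X2 e1 e2) F" by (intro xc_t l0 tendsto_intros t2)
  have d: "((\<lambda>i. Y2 (E1 i) (E2 i)) \<longlongrightarrow> Y2 e1 e2) F" by (intro yc_t l0 tendsto_intros t2)
  have "((\<lambda>i. ordf (X1 (E1 i) (E2 i)) (Y1 (E1 i) (E2 i)) (X2 (E1 i) (E2 i)) (Y2 (E1 i) (E2 i)) (seg_len (E1 i)))
         \<longlongrightarrow> ordf (X1 e1 e2) (Y1 e1 e2) (X2 e1 e2) (Y2 e1 e2) (seg_len e1)) F"
    unfolding ordf_def
    by (intro tendsto_diff mp_tendsto a b c d len_t tendsto_minus) (use nz in auto)
  moreover have "eventually (\<lambda>i. ordf (X1 (E1 i) (E2 i)) (Y1 (E1 i) (E2 i)) (X2 (E1 i) (E2 i)) (Y2 (E1 i) (E2 i)) (seg_len (E1 i))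
      = Ord (E1 i) (E2 i)) F"
    using ev_len_pos[OF l] by (rule eventually_mono) (simp add: Ord_eq)
  ultimately show ?thesis using Ord_eq[OF l0] by (simp add: Lim_transform_eventually)
qed

lemma ord_t_flat:
  assumes l: "seg_len e1 > 0" and ev: "eventually (\<lambda>i. no_interior_intersection (E1 i) (E2 i)) F"
  shows "((\<lambda>i. \<bar>Ord (E1 i) (E2 i)\<bar>) \<longlongrightarrow> ival (X1 e1 e2) (X2 e1 e2) (seg_len e1)) F"
proof -
  have l0: "seg_len e1 \<noteq> 0" using l by simp
  have a: "((\<lambda>i. X1 (E1 i) (E2 i)) \<longlongrightarrow> X1 e1 e2) F" by (intro xc_t l0 tendsto_intros t2)
  have c: "((\<lambda>i. X2 (E1 i) (E2 i)) \<longlongrightarrow> X2 e1 e2) F" by (intro xc_t l0 tendsto_intros t2)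
  have "((\<lambda>i. ival (X1 (E1 i) (E2 i)) (X2 (E1 i) (E2 i)) (seg_len (E1 i))) \<longlongrightarrow> ival (X1 e1 e2) (X2 e1 e2) (seg_len e1)) F"
    by (intro ival_tendsto a c len_t)
  moreover have "eventually (\<lambda>i. ival (X1 (E1 i) (E2 i)) (X2 (E1 i) (E2 i)) (seg_len (E1 i)) = \<bar>Ord (E1 i) (E2 i)\<bar>) F"
    using eventually_conj[OF ev_len_pos[OF l] ev] by (rule eventually_mono) (simp add: dom_abs)
  ultimately show ?thesis by (rule Lim_transform_eventually)
qed

end




lemma diameter_isometry:
  assumes iso: "\<And>x y. dist (f x) (f y) = dist x y"
  shows "diameter (f ` S) = diameter S"
proof (cases "S = {}")
  case True then show ?thesis by simp
next
  case False
  have e: "f ` S \<times> f ` S = (\<lambda>(x,y). (f x, f y)) ` (S \<times> S)" by auto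
  have "(SUP (x,y)\<in>f ` S \<times> f ` S. dist x y) = (SUP z\<in>S \<times> S. (\<lambda>(x,y). dist x y) ((\<lambda>(x,y). (f x, f y)) z))"
    unfolding e image_image by simp
  also have "\<dots> = (SUP (x,y)\<in>S \<times> S. dist x y)"
    by (rule SUP_cong) (auto simp: iso)
  finally show ?thesis using False unfolding diameter_def by simp
qed

lemma overlap_flat:
  assumes l: "seg_len e1 > 0" and y: "Y1 e1 e2 = 0" "Y2 e1 e2 = 0"
  shows "overlap_len e1 e2 = ival (X1 e1 e2) (X2 e1 e2) (seg_len e1)"
proof -
  have gen: "\<And>A B::real. (if A < B then 0 else A - B) = max 0 (A - B)" by (auto simp: max_def)
  define L where "L = seg_len e1"
  define a where "a = fst e1"
  define d where "d = snd e1 - fst e1"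
  define \<phi> where "\<phi> s = a + (s / L) *\<^sub>R d" for s
  define x1 where "x1 = X1 e1 e2"
  define x2 where "x2 = X2 e1 e2"
  have Lp: "L > 0" using l by (simp add: L_def)
  have nd: "norm d = L" by (simp add: d_def L_def seg_len_def dist_norm norm_minus_commute)
  have iso: "dist (\<phi> s) (\<phi> t) = dist s t" for s t
  proof -
    have "\<phi> s - \<phi> t = (s/L - t/L) *\<^sub>R d" by (simp add: \<phi>_def algebra_simps)
    then have "dist (\<phi> s) (\<phi> t) = \<bar>s/L - t/L\<bar> * L" by (simp add: dist_norm nd)
    also have "\<dots> = \<bar>s - t\<bar>" using Lp by (simp add: diff_divide_distrib[symmetric] abs_div)
    finally show ?thesis by (simp add: dist_real_def)
  qed
  have inj: "inj \<phi>" by (rule injI) (metis dist_eq_0_iff iso)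
  have comb: "(1-u) *\<^sub>R \<phi> p + u *\<^sub>R \<phi> q = \<phi> (p + u * (q - p))" for u p q
  proof -
    have "(1-u) *\<^sub>R \<phi> p + u *\<^sub>R \<phi> q = a + ((1-u) * (p/L) + u * (q/L)) *\<^sub>R d"
      by (simp add: \<phi>_def algebra_simps)
    also have "(1-u) * (p/L) + u * (q/L) = (p + u * (q - p)) / L" using Lp by (simp add: field_simps)
    finally show ?thesis by (simp add: \<phi>_def)
  qed
  have segimg: "closed_segment (\<phi> p) (\<phi> q) = \<phi> ` {min p q .. max p q}" for p q
  proof -
    have "x \<in> closed_segment (\<phi> p) (\<phi> q) \<longleftrightarrow> (\<exists>u\<in>{0..1}. x = \<phi> (p + u * (q - p)))" for x
      unfolding in_segment(1) comb by auto
    also have "\<dots>x \<longleftrightarrow> (\<exists>s. min p q \<le> s \<and> s \<le> max p q \<and> x = \<phi> s)" for x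
    proof
      assume "\<exists>u\<in>{0..1}. x = \<phi> (p + u * (q - p))"
      then obtain u where u: "u\<in>{0..1}" "x = \<phi> (p + u * (q - p))" by blast
      then have "min p q \<le> p + u * (q - p) \<and> p + u * (q - p) \<le> max p q"
        using seg_range[of 0 1 "p + u * (q - p)" p q] by auto
      then show "\<exists>s. min p q \<le> s \<and> s \<le> max p q \<and> x = \<phi> s" using u by blast
    next
      assume "\<exists>s. min p q \<le> s \<and> s \<le> max p q \<and> x = \<phi> s"
      then obtain s where s: "min p q \<le> s" "s \<le> max p q" "x = \<phi> s" by blast
      then obtain u where "u\<in>{0..1}" "s = p + u * (q - p)" using seg_range[of 0 1 s p q] by auto
      then show "\<exists>u\<in>{0..1}. x = \<phi> (p + u * (q - p))" using s by blast
    qed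
    finally have h: "x \<in> closed_segment (\<phi> p) (\<phi> q) \<longleftrightarrow> (\<exists>s. min p q \<le> s \<and> s \<le> max p q \<and> x = \<phi> s)" for x .
    show ?thesis
      by (rule set_eqI) (simp only: h image_iff Bex_def atLeastAtMost_iff, blast)
  qed
  have e1img: "seg_set e1 = \<phi> ` {0 .. L}"
  proof -
    have h: "fst e1 = \<phi> 0" "snd e1 = \<phi> L" using Lp by (simp_all add: \<phi>_def a_def d_def)
    show ?thesis unfolding seg_set_def h segimg using Lp by simp
  qed
  have e2img: "seg_set e2 = \<phi> ` {min x1 x2 .. max x1 x2}"
  proof -
    have "fst e2 = \<phi> x1" using recon[OF l y(1)] by (simp add: \<phi>_def a_def d_def L_def x1_def)
    moreover have "snd e2 = \<phi> x2" using recon[OF l y(2)] by (simp add: \<phi>_def a_def d_def L_def x2_def)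
    ultimately show ?thesis unfolding seg_set_def by (simp only: segimg)
  qed
  have "seg_set e1 \<inter> seg_set e2 = \<phi> ` ({0 .. L} \<inter> {min x1 x2 .. max x1 x2})"
    unfolding e1img e2img image_Int[OF inj] ..
  also have "{0 .. L} \<inter> {min x1 x2 .. max x1 x2} = {max (min x1 x2) 0 .. min (max x1 x2) L}" by auto
  finally have "overlap_len e1 e2 = diameter {max (min x1 x2) 0 .. min (max x1 x2) L}"
    unfolding overlap_len_def using diameter_isometry[of \<phi>, OF iso] by simp
  also have "\<dots> = ival x1 x2 L" unfolding ival_def hh_def diameter_closed_interval
    by (rule gen)
  finally show ?thesis by (simp add: x1_def x2_def L_def)
qed




lemma part2: "continuous_on {(e1, e2). no_interior_intersection e1 e2} (\<lambda>(e1, e2). Ord e1 e2)"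
proof -
  define D where "D = {(e1::oseg, e2::oseg). no_interior_intersection e1 e2}"
  have fe: "(\<lambda>(e1, e2). Ord e1 e2) = (\<lambda>w. Ord (fst w) (snd w))" by auto
  have "((\<lambda>w. Ord (fst w) (snd w)) \<longlongrightarrow> Ord (fst x) (snd x)) (at x within D)" if xD: "x \<in> D" for x
  proof -
    obtain e1 e2 where x: "x = (e1, e2)" by (cases x)
    have nii: "no_interior_intersection e1 e2" using xD by (simp add: D_def x)
    have t1: "(fst \<longlongrightarrow> e1) (at x within D)" proof -
      have "((\<lambda>w. fst w) \<longlongrightarrow> fst x) (at x within D)" by (intro tendsto_intros)
      then show ?thesis by (simp add: x)
    qed
    have t2: "(snd \<longlongrightarrow> e2) (at x within D)" proof -
      have "((\<lambda>w. snd w) \<longlongrightarrow> snd x) (at x within D)" by (intro tendsto_intros)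
      then show ?thesis by (simp add: x)
    qed
    have ev: "eventually (\<lambda>w. no_interior_intersection (fst w) (snd w)) (at x within D)"
      unfolding eventually_at_filter by (rule always_eventually) (auto simp: D_def)
    have l0: "0 \<le> seg_len e1" by (simp add: seg_len_def)
    show ?thesis
    proof (cases "seg_len e1 = 0")
      case True
      then show ?thesis using ord_t_len0[OF t1 t2] by (simp add: x)
    next
      case False
      then have l: "seg_len e1 > 0" using l0 by simp
      show ?thesis
      proof (cases "Y1 e1 e2 = 0 \<and> Y2 e1 e2 = 0")
        case True
        have "((\<lambda>w. \<bar>Ord (fst w) (snd w)\<bar>) \<longlongrightarrow> 0) (at x within D)"
          using ord_t_flat[OF t1 t2 l ev] dom_flat[OF l nii] True by simp
        then have "((\<lambda>w. Ord (fst w) (snd w)) \<longlongrightarrow> 0) (at x within D)"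
          by (simp add: tendsto_rabs_zero_iff)
        moreover have "Ord e1 e2 = 0" using False True by (simp add: Ord_eq ordf_zero)
        ultimately show ?thesis by (simp add: x)
      next
        case False
        then show ?thesis using ord_t_good[OF t1 t2 l] by (simp add: x)
      qed
    qed
  qed
  then show ?thesis unfolding continuous_on_def fe D_def by auto
qed

lemma part3:
  fixes s1 s2 :: "nat \<Rightarrow> oseg"
  assumes t1: "s1 \<longlonglongrightarrow> e1" and t2: "s2 \<longlonglongrightarrow> e2"
    and nii: "\<forall>n. no_interior_intersection (s1 n) (s2 n)"
  shows "(\<lambda>n. Ord (s1 n) (s2 n)) \<longlonglongrightarrow> Ord e1 e2 \<or>
            (\<forall>a. (\<exists>r. strict_mono r \<and> ((\<lambda>n. Ord (s1 n) (s2 n)) \<circ> r) \<longlonglongrightarrow> a)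
                  \<longrightarrow> a = overlap_len e1 e2 \<or> a = - overlap_len e1 e2)"
proof -
  have l0: "0 \<le> seg_len e1" by (simp add: seg_len_def)
  show ?thesis
  proof (cases "seg_len e1 = 0")
    case True
    then show ?thesis using ord_t_len0[OF t1 t2] by simp
  next
    case False
    then have l: "seg_len e1 > 0" using l0 by simp
    show ?thesis
    proof (cases "Y1 e1 e2 = 0 \<and> Y2 e1 e2 = 0")
      case False
      then show ?thesis using ord_t_good[OF t1 t2 l] by simp
    next
      case True
      define d where "d = overlap_len e1 e2"
      have dd: "d = ival (X1 e1 e2) (X2 e1 e2) (seg_len e1)" using overlap_flat[OF l] True by (simp add: d_def)
      have lim: "(\<lambda>n. \<bar>Ord (s1 n) (s2 n)\<bar>) \<longlonglongrightarrow> d"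
        unfolding dd by (rule ord_t_flat[OF t1 t2 l]) (use nii in simp)
      have "a = d \<or> a = - d" if "strict_mono r" "((\<lambda>n. Ord (s1 n) (s2 n)) \<circ> r) \<longlonglongrightarrow> a" for a r
      proof -
        have "((\<lambda>n. \<bar>Ord (s1 n) (s2 n)\<bar>) \<circ> r) \<longlonglongrightarrow> d" by (rule LIMSEQ_subseq_LIMSEQ[OF lim that(1)])
        moreover have "((\<lambda>n. \<bar>Ord (s1 n) (s2 n)\<bar>) \<circ> r) \<longlonglongrightarrow> \<bar>a\<bar>"
          using tendsto_rabs[OF that(2)] by (simp add: o_def)
        ultimately have "\<bar>a\<bar> = d" by (rule LIMSEQ_unique[rotated])
        then show ?thesis by auto
      qed
      then show ?thesis by (auto simp: d_def)
    qed
  qed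
qed




datatype sfml = FEq mpoly | FGt mpoly | FAnd sfml sfml | FOr sfml sfml | FNot sfml

primrec fev :: "sfml \<Rightarrow> real list \<Rightarrow> bool" where
  "fev (FEq p) xs = (mpeval p xs = 0)"
| "fev (FGt p) xs = (mpeval p xs > 0)"
| "fev (FAnd a b) xs = (fev a xs \<and> fev b xs)"
| "fev (FOr a b) xs = (fev a xs \<or> fev b xs)"
| "fev (FNot a) xs = (\<not> fev a xs)"

definition "FGe p = FOr (FGt p) (FEq p)"
lemma fev_FGe[simp]: "fev (FGe p) xs = (mpeval p xs \<ge> 0)"
  by (auto simp: FGe_def)

definition "FFalse = FNot (FEq (Const 0))"
lemma fev_FFalse[simp]: "fev FFalse xs = False" by (simp add: FFalse_def)

fun disj :: "sfml list \<Rightarrow> sfml" where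
  "disj [] = FFalse"
| "disj (f # fs) = FOr f (disj fs)"

lemma fev_disj[simp]: "fev (disj fs) xs \<longleftrightarrow> (\<exists>f\<in>set fs. fev f xs)"
  by (induction fs) auto

lemma sa_fml: "semialgebraic n {xs \<in> Rn n. fev \<phi> xs}"
proof (induction \<phi>)
  case (FEq p) then show ?case using sa_zero[of n p] by simp
next
  case (FGt p) then show ?case using sa_pos[of n p] by simp
next
  case (FAnd a b)
  have "{xs \<in> Rn n. fev (FAnd a b) xs} = {xs \<in> Rn n. fev a xs} \<inter> {xs \<in> Rn n. fev b xs}" by auto
  then show ?case using sa_inter[OF FAnd.IH] by simp
next
  case (FOr a b)
  have "{xs \<in> Rn n. fev (FOr a b) xs} = {xs \<in> Rn n. fev a xs} \<union> {xs \<in> Rn n. fev b xs}" by auto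
  then show ?case using sa_union[OF FOr.IH] by simp
next
  case (FNot a)
  have "{xs \<in> Rn n. fev (FNot a) xs} = Rn n - {xs \<in> Rn n. fev a xs}" by auto
  then show ?case using sa_compl[OF FNot.IH] by simp
qed

datatype sterm = TP mpoly | TAdd sterm sterm | TSub sterm sterm | TMul sterm sterm | TDiv sterm sterm
  | TMax sterm sterm | TMin sterm sterm | TIf sterm sterm sterm

primrec tev :: "sterm \<Rightarrow> real list \<Rightarrow> real" where
  "tev (TP p) xs = mpeval p xs"
| "tev (TAdd a b) xs = tev a xs + tev b xs"
| "tev (TSub a b) xs = tev a xs - tev b xs"
| "tev (TMul a b) xs = tev a xs * tev b xs"
| "tev (TDiv a b) xs = tev a xs / tev b xs"
| "tev (TMax a b) xs = max (tev a xs) (tev b xs)"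
| "tev (TMin a b) xs = min (tev a xs) (tev b xs)"
| "tev (TIf c a b) xs = (if 0 \<le> tev c xs then tev a xs else tev b xs)"

type_synonym piece = "sfml \<times> mpoly \<times> mpoly"

definition rep :: "sterm \<Rightarrow> piece list \<Rightarrow> bool" where
  "rep t R \<longleftrightarrow> (\<forall>xs. \<exists>(\<phi>,N,D)\<in>set R. fev \<phi> xs) \<and>
     (\<forall>(\<phi>,N,D)\<in>set R. \<forall>xs. fev \<phi> xs \<longrightarrow> mpeval D xs \<noteq> 0 \<and> tev t xs = mpeval N xs / mpeval D xs)"

definition comb2 :: "(piece \<Rightarrow> piece \<Rightarrow> piece list) \<Rightarrow> piece list \<Rightarrow> piece list \<Rightarrow> piece list" where
  "comb2 g R S = concat (map (\<lambda>a. concat (map (g a) S)) R)"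

lemma comb2_mem: "c \<in> set (comb2 g R S) \<longleftrightarrow> (\<exists>a\<in>set R. \<exists>b\<in>set S. c \<in> set (g a b))"
  by (auto simp: comb2_def)

definition "PSub p q = Add p (Neg q)"
lemma mpeval_PSub[simp]: "mpeval (PSub p q) xs = mpeval p xs - mpeval q xs" by (simp add: PSub_def)

lemma sign_div: "(y::real) \<noteq> 0 \<Longrightarrow> (0 \<le> x / y) \<longleftrightarrow> (0 \<le> x * y)"
  by (auto simp: zero_le_divide_iff zero_le_mult_iff)

lemma cmp_frac:
  fixes n d m e :: real
  assumes "d \<noteq> 0" "e \<noteq> 0"
  shows "(m / e \<le> n / d) \<longleftrightarrow> 0 \<le> (n * e - m * d) * (d * e)"
proof -
  have "n / d - m / e = (n * e - m * d) / (d * e)" using assms by (simp add: field_simps)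
  then have "(m / e \<le> n / d) \<longleftrightarrow> 0 \<le> (n * e - m * d) / (d * e)" by linarith
  also have "\<dots> \<longleftrightarrow> 0 \<le> (n * e - m * d) * (d * e)" using assms by (simp add: sign_div)
  finally show ?thesis .
qed

lemma rep_bin:
  assumes Ra: "rep a R" and Sb: "rep b S"
    and cov: "\<And>\<phi> N D \<psi> M E xs. fev \<phi> xs \<Longrightarrow> fev \<psi> xs \<Longrightarrow> mpeval D xs \<noteq> 0 \<Longrightarrow> mpeval E xs \<noteq> 0 \<Longrightarrow>
               \<exists>(\<theta>,P,Q)\<in>set (g (\<phi>,N,D) (\<psi>,M,E)). fev \<theta> xs"
    and cor: "\<And>\<phi> N D \<psi> M E \<theta> P Q xs. (\<theta>,P,Q) \<in> set (g (\<phi>,N,D) (\<psi>,M,E)) \<Longrightarrow> fev \<theta> xs \<Longrightarrow>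
               fev \<phi> xs \<and> fev \<psi> xs \<and>
               (mpeval D xs \<noteq> 0 \<longrightarrow> mpeval E xs \<noteq> 0 \<longrightarrow>
                 mpeval Q xs \<noteq> 0 \<and> f (mpeval N xs / mpeval D xs) (mpeval M xs / mpeval E xs) = mpeval P xs / mpeval Q xs)"
    and tf: "\<And>xs. tev t xs = f (tev a xs) (tev b xs)"
  shows "rep t (comb2 g R S)"
proof -
  have A: "\<exists>(\<theta>,P,Q)\<in>set (comb2 g R S). fev \<theta> xs" for xs
  proof -
    obtain \<phi> N D where p1: "(\<phi>,N,D) \<in> set R" "fev \<phi> xs" using Ra unfolding rep_def by blast
    obtain \<psi> M E where p2: "(\<psi>,M,E) \<in> set S" "fev \<psi> xs" using Sb unfolding rep_def by blast
    have dD: "mpeval D xs \<noteq> 0" using Ra p1 unfolding rep_def by (auto dest!: bspec[where x="(\<phi>,N,D)"])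
    have dE: "mpeval E xs \<noteq> 0" using Sb p2 unfolding rep_def by (auto dest!: bspec[where x="(\<psi>,M,E)"])
    obtain \<theta> P Q where th: "(\<theta>,P,Q) \<in> set (g (\<phi>,N,D) (\<psi>,M,E))" "fev \<theta> xs"
      using cov[OF p1(2) p2(2) dD dE] by blast
    have mem: "(\<theta>,P,Q) \<in> set (comb2 g R S)" unfolding comb2_mem using p1(1) p2(1) th(1) by blast
    show ?thesis by (rule bexI[of _ "(\<theta>,P,Q)"]) (use mem th(2) in simp_all)
  qed
  have B: "mpeval Q xs \<noteq> 0 \<and> tev t xs = mpeval P xs / mpeval Q xs"
    if m: "(\<theta>,P,Q) \<in> set (comb2 g R S)" and f: "fev \<theta> xs" for \<theta> P Q xs
  proof -
    obtain pa pb where pa: "pa \<in> set R" and pb: "pb \<in> set S" and c: "(\<theta>,P,Q) \<in> set (g pa pb)"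
      using m unfolding comb2_mem by blast
    obtain \<phi> N D where pa': "pa = (\<phi>,N,D)" by (cases pa)
    obtain \<psi> M E where pb': "pb = (\<psi>,M,E)" by (cases pb)
    note cc = cor[OF c[unfolded pa' pb'] f]
    have h1: "mpeval D xs \<noteq> 0 \<and> tev a xs = mpeval N xs / mpeval D xs"
      using Ra pa cc unfolding rep_def pa' by (auto dest!: bspec[where x="(\<phi>,N,D)"])
    have h2: "mpeval E xs \<noteq> 0 \<and> tev b xs = mpeval M xs / mpeval E xs"
      using Sb pb cc unfolding rep_def pb' by (auto dest!: bspec[where x="(\<psi>,M,E)"])
    have "mpeval Q xs \<noteq> 0 \<and> f (mpeval N xs / mpeval D xs) (mpeval M xs / mpeval E xs) = mpeval P xs / mpeval Q xs"
      using cc h1 h2 by blast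
    then show ?thesis using h1 h2 tf[of xs] by simp
  qed
  show ?thesis unfolding rep_def
  proof (intro conjI allI)
    show "\<exists>(\<theta>,P,Q)\<in>set (comb2 g R S). fev \<theta> xs" for xs by (rule A)
    show "\<forall>(\<theta>,P,Q)\<in>set (comb2 g R S). \<forall>xs. fev \<theta> xs \<longrightarrow> mpeval Q xs \<noteq> 0 \<and> tev t xs = mpeval P xs / mpeval Q xs"
    proof (rule ballI)
      fix c assume c: "c \<in> set (comb2 g R S)"
      obtain \<theta> P Q where "c = (\<theta>,P,Q)" by (cases c)
      then show "case c of (\<theta>,P,Q) \<Rightarrow> \<forall>xs. fev \<theta> xs \<longrightarrow> mpeval Q xs \<noteq> 0 \<and> tev t xs = mpeval P xs / mpeval Q xs"
        using B c by simp
    qed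
  qed
qed

definition comb3 :: "(piece \<Rightarrow> piece \<Rightarrow> piece \<Rightarrow> piece list) \<Rightarrow> piece list \<Rightarrow> piece list \<Rightarrow> piece list \<Rightarrow> piece list" where
  "comb3 g R S T = concat (map (\<lambda>a. concat (map (\<lambda>b. concat (map (g a b) T)) S)) R)"

lemma comb3_mem: "c \<in> set (comb3 g R S T) \<longleftrightarrow> (\<exists>a\<in>set R. \<exists>b\<in>set S. \<exists>d\<in>set T. c \<in> set (g a b d))"
  by (auto simp: comb3_def)

lemma rep_piece: "rep t R \<Longrightarrow> (\<phi>,N,D) \<in> set R \<Longrightarrow> fev \<phi> xs \<Longrightarrow> mpeval D xs \<noteq> 0 \<and> tev t xs = mpeval N xs / mpeval D xs"
  unfolding rep_def by (auto dest!: bspec[where x="(\<phi>,N,D)"])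

lemma rep_cover: "rep t R \<Longrightarrow> \<exists>\<phi> N D. (\<phi>,N,D) \<in> set R \<and> fev \<phi> xs"
  unfolding rep_def by blast

lemma rep_tern:
  assumes Rc: "rep c R" and Sa: "rep a S" and Tb: "rep b T"
    and cov: "\<And>\<phi>1 N1 D1 \<phi>2 N2 D2 \<phi>3 N3 D3 xs. fev \<phi>1 xs \<Longrightarrow> fev \<phi>2 xs \<Longrightarrow> fev \<phi>3 xs \<Longrightarrow>
               mpeval D1 xs \<noteq> 0 \<Longrightarrow> mpeval D2 xs \<noteq> 0 \<Longrightarrow> mpeval D3 xs \<noteq> 0 \<Longrightarrow>
               \<exists>(\<theta>,P,Q)\<in>set (g (\<phi>1,N1,D1) (\<phi>2,N2,D2) (\<phi>3,N3,D3)). fev \<theta> xs"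
    and cor: "\<And>\<phi>1 N1 D1 \<phi>2 N2 D2 \<phi>3 N3 D3 \<theta> P Q xs. (\<theta>,P,Q) \<in> set (g (\<phi>1,N1,D1) (\<phi>2,N2,D2) (\<phi>3,N3,D3)) \<Longrightarrow> fev \<theta> xs \<Longrightarrow>
               fev \<phi>1 xs \<and> fev \<phi>2 xs \<and> fev \<phi>3 xs \<and>
               (mpeval D1 xs \<noteq> 0 \<longrightarrow> mpeval D2 xs \<noteq> 0 \<longrightarrow> mpeval D3 xs \<noteq> 0 \<longrightarrow>
                 mpeval Q xs \<noteq> 0 \<and> f (mpeval N1 xs / mpeval D1 xs) (mpeval N2 xs / mpeval D2 xs) (mpeval N3 xs / mpeval D3 xs) = mpeval P xs / mpeval Q xs)"
    and tf: "\<And>xs. tev t xs = f (tev c xs) (tev a xs) (tev b xs)"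
  shows "rep t (comb3 g R S T)"
proof -
  have A: "\<exists>(\<theta>,P,Q)\<in>set (comb3 g R S T). fev \<theta> xs" for xs
  proof -
    obtain \<phi>1 N1 D1 where p1: "(\<phi>1,N1,D1) \<in> set R" "fev \<phi>1 xs" using rep_cover[OF Rc] by blast
    obtain \<phi>2 N2 D2 where p2: "(\<phi>2,N2,D2) \<in> set S" "fev \<phi>2 xs" using rep_cover[OF Sa] by blast
    obtain \<phi>3 N3 D3 where p3: "(\<phi>3,N3,D3) \<in> set T" "fev \<phi>3 xs" using rep_cover[OF Tb] by blast
    have d1: "mpeval D1 xs \<noteq> 0" using rep_piece[OF Rc p1] by blast
    have d2: "mpeval D2 xs \<noteq> 0" using rep_piece[OF Sa p2] by blast
    have d3: "mpeval D3 xs \<noteq> 0" using rep_piece[OF Tb p3] by blast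
    obtain \<theta> P Q where th: "(\<theta>,P,Q) \<in> set (g (\<phi>1,N1,D1) (\<phi>2,N2,D2) (\<phi>3,N3,D3))" "fev \<theta> xs"
      using cov[OF p1(2) p2(2) p3(2) d1 d2 d3] by blast
    have mem: "(\<theta>,P,Q) \<in> set (comb3 g R S T)" unfolding comb3_mem using p1(1) p2(1) p3(1) th(1) by blast
    show ?thesis by (rule bexI[of _ "(\<theta>,P,Q)"]) (use mem th(2) in simp_all)
  qed
  have B: "mpeval Q xs \<noteq> 0 \<and> tev t xs = mpeval P xs / mpeval Q xs"
    if m: "(\<theta>,P,Q) \<in> set (comb3 g R S T)" and fv: "fev \<theta> xs" for \<theta> P Q xs
  proof -
    obtain pa pb pc where pa: "pa \<in> set R" and pb: "pb \<in> set S" and pc: "pc \<in> set T"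
       and c: "(\<theta>,P,Q) \<in> set (g pa pb pc)"
      using m unfolding comb3_mem by blast
    obtain \<phi>1 N1 D1 where pa': "pa = (\<phi>1,N1,D1)" by (cases pa)
    obtain \<phi>2 N2 D2 where pb': "pb = (\<phi>2,N2,D2)" by (cases pb)
    obtain \<phi>3 N3 D3 where pc': "pc = (\<phi>3,N3,D3)" by (cases pc)
    note cc = cor[OF c[unfolded pa' pb' pc'] fv]
    have h1: "mpeval D1 xs \<noteq> 0 \<and> tev c xs = mpeval N1 xs / mpeval D1 xs"
      using rep_piece[OF Rc pa[unfolded pa']] cc by blast
    have h2: "mpeval D2 xs \<noteq> 0 \<and> tev a xs = mpeval N2 xs / mpeval D2 xs"
      using rep_piece[OF Sa pb[unfolded pb']] cc by blast
    have h3: "mpeval D3 xs \<noteq> 0 \<and> tev b xs = mpeval N3 xs / mpeval D3 xs"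
      using rep_piece[OF Tb pc[unfolded pc']] cc by blast
    have "mpeval Q xs \<noteq> 0 \<and> f (mpeval N1 xs / mpeval D1 xs) (mpeval N2 xs / mpeval D2 xs) (mpeval N3 xs / mpeval D3 xs) = mpeval P xs / mpeval Q xs"
      using cc h1 h2 h3 by blast
    then show ?thesis using h1 h2 h3 tf[of xs] by simp
  qed
  show ?thesis unfolding rep_def
  proof (intro conjI allI)
    show "\<exists>(\<theta>,P,Q)\<in>set (comb3 g R S T). fev \<theta> xs" for xs by (rule A)
    show "\<forall>(\<theta>,P,Q)\<in>set (comb3 g R S T). \<forall>xs. fev \<theta> xs \<longrightarrow> mpeval Q xs \<noteq> 0 \<and> tev t xs = mpeval P xs / mpeval Q xs"
    proof (rule ballI)
      fix c assume c: "c \<in> set (comb3 g R S T)"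
      obtain \<theta> P Q where "c = (\<theta>,P,Q)" by (cases c)
      then show "case c of (\<theta>,P,Q) \<Rightarrow> \<forall>xs. fev \<theta> xs \<longrightarrow> mpeval Q xs \<noteq> 0 \<and> tev t xs = mpeval P xs / mpeval Q xs"
        using B c by simp
    qed
  qed
qed

definition gAdd :: "piece \<Rightarrow> piece \<Rightarrow> piece list" where
  "gAdd a b = (case a of (\<phi>,N,D) \<Rightarrow> case b of (\<psi>,M,E) \<Rightarrow> [(FAnd \<phi> \<psi>, Add (Mul N E) (Mul M D), Mul D E)])"
definition gSub :: "piece \<Rightarrow> piece \<Rightarrow> piece list" where
  "gSub a b = (case a of (\<phi>,N,D) \<Rightarrow> case b of (\<psi>,M,E) \<Rightarrow> [(FAnd \<phi> \<psi>, PSub (Mul N E) (Mul M D), Mul D E)])"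
definition gMul :: "piece \<Rightarrow> piece \<Rightarrow> piece list" where
  "gMul a b = (case a of (\<phi>,N,D) \<Rightarrow> case b of (\<psi>,M,E) \<Rightarrow> [(FAnd \<phi> \<psi>, Mul N M, Mul D E)])"
definition gDiv :: "piece \<Rightarrow> piece \<Rightarrow> piece list" where
  "gDiv a b = (case a of (\<phi>,N,D) \<Rightarrow> case b of (\<psi>,M,E) \<Rightarrow>
     [(FAnd (FAnd \<phi> \<psi>) (FNot (FEq M)), Mul N E, Mul D M), (FAnd (FAnd \<phi> \<psi>) (FEq M), Const 0, Const 1)])"
definition gMax :: "piece \<Rightarrow> piece \<Rightarrow> piece list" where
  "gMax a b = (case a of (\<phi>,N,D) \<Rightarrow> case b of (\<psi>,M,E) \<Rightarrow>
     [(FAnd (FAnd \<phi> \<psi>) (FGe (Mul (PSub (Mul N E) (Mul M D)) (Mul D E))), N, D),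
      (FAnd (FAnd \<phi> \<psi>) (FNot (FGe (Mul (PSub (Mul N E) (Mul M D)) (Mul D E)))), M, E)])"
definition gMin :: "piece \<Rightarrow> piece \<Rightarrow> piece list" where
  "gMin a b = (case a of (\<phi>,N,D) \<Rightarrow> case b of (\<psi>,M,E) \<Rightarrow>
     [(FAnd (FAnd \<phi> \<psi>) (FGe (Mul (PSub (Mul N E) (Mul M D)) (Mul D E))), M, E),
      (FAnd (FAnd \<phi> \<psi>) (FNot (FGe (Mul (PSub (Mul N E) (Mul M D)) (Mul D E)))), N, D)])"
definition gIf :: "piece \<Rightarrow> piece \<Rightarrow> piece \<Rightarrow> piece list" where
  "gIf a b c = (case a of (\<phi>1,N1,D1) \<Rightarrow> case b of (\<phi>2,N2,D2) \<Rightarrow> case c of (\<phi>3,N3,D3) \<Rightarrow>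
     [(FAnd \<phi>1 (FAnd \<phi>2 (FAnd \<phi>3 (FGe (Mul N1 D1)))), N2, D2),
      (FAnd \<phi>1 (FAnd \<phi>2 (FAnd \<phi>3 (FNot (FGe (Mul N1 D1))))), N3, D3)])"

lemma rep_ex: "\<exists>R. rep t R"
proof (induction t)
  case (TP p)
  have "rep (TP p) [(FEq (Const 0), p, Const 1)]" unfolding rep_def by simp
  then show ?case by blast
next
  case (TAdd a b)
  then obtain R S where "rep a R" "rep b S" by blast
  have "rep (TAdd a b) (comb2 gAdd R S)"
    by (rule rep_bin[OF \<open>rep a R\<close> \<open>rep b S\<close>, where f="(+)"]) (auto simp: gAdd_def field_simps)
  then show ?case by blast
next
  case (TSub a b)
  then obtain R S where "rep a R" "rep b S" by blast
  have "rep (TSub a b) (comb2 gSub R S)"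
    by (rule rep_bin[OF \<open>rep a R\<close> \<open>rep b S\<close>, where f="(-)"]) (auto simp: gSub_def field_simps)
  then show ?case by blast
next
  case (TMul a b)
  then obtain R S where "rep a R" "rep b S" by blast
  have "rep (TMul a b) (comb2 gMul R S)"
    by (rule rep_bin[OF \<open>rep a R\<close> \<open>rep b S\<close>, where f="(*)"]) (auto simp: gMul_def)
  then show ?case by blast
next
  case (TDiv a b)
  then obtain R S where "rep a R" "rep b S" by blast
  have "rep (TDiv a b) (comb2 gDiv R S)"
  proof (rule rep_bin[OF \<open>rep a R\<close> \<open>rep b S\<close>, where f="(/)"])
    show "\<exists>(\<theta>,P,Q)\<in>set (gDiv (\<phi>,N,D) (\<psi>,M,E)). fev \<theta> xs" if "fev \<phi> xs" "fev \<psi> xs" for \<phi> N D \<psi> M E xs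
      using that by (cases "mpeval M xs = 0") (auto simp: gDiv_def)
  qed (auto simp: gDiv_def)
  then show ?case by blast
next
  case (TMax a b)
  then obtain R S where "rep a R" "rep b S" by blast
  have "rep (TMax a b) (comb2 gMax R S)"
  proof (rule rep_bin[OF \<open>rep a R\<close> \<open>rep b S\<close>, where f="max"])
    show "\<exists>(\<theta>,P,Q)\<in>set (gMax (\<phi>,N,D) (\<psi>,M,E)). fev \<theta> xs" if "fev \<phi> xs" "fev \<psi> xs" for \<phi> N D \<psi> M E xs
      using that by (auto simp: gMax_def)
  qed (auto simp: gMax_def cmp_frac[symmetric] max_def)
  then show ?case by blast
next
  case (TMin a b)
  then obtain R S where "rep a R" "rep b S" by blast
  have "rep (TMin a b) (comb2 gMin R S)"
  proof (rule rep_bin[OF \<open>rep a R\<close> \<open>rep b S\<close>, where f="min"])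
    show "\<exists>(\<theta>,P,Q)\<in>set (gMin (\<phi>,N,D) (\<psi>,M,E)). fev \<theta> xs" if "fev \<phi> xs" "fev \<psi> xs" for \<phi> N D \<psi> M E xs
      using that by (auto simp: gMin_def)
  qed (auto simp: gMin_def cmp_frac[symmetric] min_def)
  then show ?case by blast
next
  case (TIf c a b)
  then obtain R S T where "rep c R" "rep a S" "rep b T" by blast
  have "rep (TIf c a b) (comb3 gIf R S T)"
  proof (rule rep_tern[OF \<open>rep c R\<close> \<open>rep a S\<close> \<open>rep b T\<close>, where f="\<lambda>x y z. if 0 \<le> x then y else z"])
    show "\<exists>(\<theta>,P,Q)\<in>set (gIf (\<phi>1,N1,D1) (\<phi>2,N2,D2) (\<phi>3,N3,D3)). fev \<theta> xs"
      if "fev \<phi>1 xs" "fev \<phi>2 xs" "fev \<phi>3 xs" for \<phi>1 N1 D1 \<phi>2 N2 D2 \<phi>3 N3 D3 xs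
      using that by (auto simp: gIf_def)
  qed (auto simp: gIf_def sign_div)
  then show ?case by blast
qed




definition "d1p = PSub (Var 2) (Var 0)"
definition "d2p = PSub (Var 3) (Var 1)"
definition "Lp = Add (Mul d1p d1p) (Mul d2p d2p)"
definition Xp :: "nat \<Rightarrow> nat \<Rightarrow> mpoly" where "Xp i j = Add (Mul (PSub (Var i) (Var 0)) d1p) (Mul (PSub (Var j) (Var 1)) d2p)"
definition Yp :: "nat \<Rightarrow> nat \<Rightarrow> mpoly" where "Yp i j = PSub (Mul d1p (PSub (Var j) (Var 1))) (Mul d2p (PSub (Var i) (Var 0)))"

definition "T0 = TP (Const 0)"
definition "ivalT a b l = TMax T0 (TSub (TMin (TMax a b) l) (TMax (TMin a b) T0))"
definition "crT x1 y1 x2 y2 = TAdd x1 (TMul (TDiv y1 (TSub y1 y2)) (TSub x2 x1))"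
definition "mpT x1 y1 x2 y2 l = TIf y1 (TIf y2 (ivalT x1 x2 l) (ivalT x1 (crT x1 y1 x2 y2) l))
                                       (TIf y2 (ivalT (crT x1 y1 x2 y2) x2 l) T0)"
definition "NegT y = TSub T0 y"
definition "Gterm = TSub (mpT (TP (Xp 4 5)) (TP (Yp 4 5)) (TP (Xp 6 7)) (TP (Yp 6 7)) (TP Lp))
                      (mpT (TP (Xp 4 5)) (NegT (TP (Yp 4 5))) (TP (Xp 6 7)) (NegT (TP (Yp 6 7))) (TP Lp))"

lemma tev_mpT: "tev (mpT a b c d e) xs = mp (tev a xs) (tev b xs) (tev c xs) (tev d xs) (tev e xs)"
  by (simp add: mpT_def mp_def ivalT_def ival_def hh_def crT_def cr_def T0_def)

lemma tev_NegT: "tev (NegT y) xs = - tev y xs" by (simp add: NegT_def T0_def)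

lemma hh_scale: "c > 0 \<Longrightarrow> hh (lo/c) (hi/c) (l/c) = hh lo hi l / c"
  by (simp add: hh_def min_divide_distrib_right max_divide_distrib_right diff_divide_distrib)

lemma ival_scale: "c > 0 \<Longrightarrow> ival (a/c) (b/c) (l/c) = ival a b l / c"
proof -
  assume c: "c > 0"
  have "min (a/c) (b/c) = min a b / c" "max (a/c) (b/c) = max a b / c"
    using c by (simp_all add: min_divide_distrib_right max_divide_distrib_right)
  then show ?thesis using c by (simp add: ival_def hh_scale)
qed

lemma cr_scale: "c > 0 \<Longrightarrow> cr (x1/c) (y1/c) (x2/c) (y2/c) = cr x1 y1 x2 y2 / c"
proof -
  assume c: "c > 0"
  have "(y1/c) / (y1/c - y2/c) = y1 / (y1 - y2)"
    using c by (simp add: diff_divide_distrib[symmetric])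
  then show ?thesis using c by (simp add: cr_def diff_divide_distrib[symmetric] add_divide_distrib)
qed

lemma mp_scale: "c > 0 \<Longrightarrow> mp (x1/c) (y1/c) (x2/c) (y2/c) (l/c) = mp x1 y1 x2 y2 l / c"
  by (simp add: mp_def zero_le_divide_iff cr_scale ival_scale)

lemma Ord8_formula:
  "Ord8 xs = (if mpeval Lp xs = 0 then 0 else tev Gterm xs / sqrt (mpeval Lp xs))"
proof -
  define e1 where "e1 = ((xs!0, xs!1), (xs!2, xs!3))"
  define e2 where "e2 = ((xs!4, xs!5), (xs!6, xs!7))"
  define Lv where "Lv = mpeval Lp xs"
  have O: "Ord8 xs = Ord e1 e2" by (simp add: Ord8_def e1_def e2_def)
  have sl: "seg_len e1 = sqrt Lv"
    by (simp add: seg_len_def e1_def Lv_def Lp_def d1p_def d2p_def dist_Pair_Pair dist_real_def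
        power2_eq_square algebra_simps)
  have L0: "Lv \<ge> 0" by (simp add: Lv_def Lp_def)
  show ?thesis
  proof (cases "Lv = 0")
    case True
    then show ?thesis using O sl by (simp add: Ord_len0 Lv_def)
  next
    case False
    define s where "s = sqrt Lv"
    have s: "s > 0" using False L0 by (simp add: s_def)
    have ss: "Lv / s = s" using s by (simp add: s_def real_div_sqrt L0)
    have sl0: "seg_len e1 \<noteq> 0" using sl s by (simp add: s_def)
    have xc1: "X1 e1 e2 = mpeval (Xp 4 5) xs / s"
      unfolding xcoord_def sl s_def[symmetric] by (simp add: e1_def e2_def Xp_def d1p_def d2p_def)
    have xc2: "X2 e1 e2 = mpeval (Xp 6 7) xs / s"
      unfolding xcoord_def sl s_def[symmetric] by (simp add: e1_def e2_def Xp_def d1p_def d2p_def)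
    have yc1: "Y1 e1 e2 = mpeval (Yp 4 5) xs / s"
      unfolding ycoord_def sl s_def[symmetric] by (simp add: e1_def e2_def Yp_def d1p_def d2p_def)
    have yc2: "Y2 e1 e2 = mpeval (Yp 6 7) xs / s"
      unfolding ycoord_def sl s_def[symmetric] by (simp add: e1_def e2_def Yp_def d1p_def d2p_def)
    have "Ord e1 e2 = ordf (X1 e1 e2) (Y1 e1 e2) (X2 e1 e2) (Y2 e1 e2) (seg_len e1)"
      by (rule Ord_eq[OF sl0])
    also have "\<dots> = mp (mpeval (Xp 4 5) xs / s) (mpeval (Yp 4 5) xs / s) (mpeval (Xp 6 7) xs / s) (mpeval (Yp 6 7) xs / s) (Lv / s)
       - mp (mpeval (Xp 4 5) xs / s) ((- mpeval (Yp 4 5) xs) / s) (mpeval (Xp 6 7) xs / s) ((- mpeval (Yp 6 7) xs) / s) (Lv / s)"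
      by (simp add: ordf_def xc1 xc2 yc1 yc2 sl ss s_def[symmetric])
    also have "\<dots> = tev Gterm xs / s"
      unfolding mp_scale[OF s] by (simp add: Gterm_def tev_mpT tev_NegT Lv_def diff_divide_distrib)
    finally show ?thesis using O False by (simp add: s_def Lv_def)
  qed
qed

lemma key_eq:
  fixes t L N D :: real
  assumes L: "L > 0" and D: "D \<noteq> 0"
  shows "t = (N / D) / sqrt L \<longleftrightarrow> (t * t * L * (D * D) - N * N = 0 \<and> 0 \<le> t * N * D)"
proof -
  define s where "s = sqrt L"
  have s: "s > 0" "L = s * s" using L by (simp_all add: s_def)
  show ?thesis
  proof
    assume t: "t = (N / D) / sqrt L"
    have ts: "t * s * D = N" unfolding t s_def[symmetric] using s(1) D by (simp add: field_simps)
    have "t * t * L * (D * D) = (t * s * D) * (t * s * D)" unfolding s(2) by (simp add: mult_ac)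
    moreover have "t * N * D = (t * s * D) * (t * s * D) / s" unfolding ts[symmetric] using s(1) by (simp add: field_simps)
    ultimately show "t * t * L * (D * D) - N * N = 0 \<and> 0 \<le> t * N * D" using ts s(1) by simp
  next
    assume h: "t * t * L * (D * D) - N * N = 0 \<and> 0 \<le> t * N * D"
    have e: "t * t * L * (D * D) = (t * s * D) * (t * s * D)" unfolding s(2) by (simp add: mult_ac)
    have "(t * s * D) * (t * s * D) = N * N" using h e by linarith
    then have "t * s * D = N \<or> t * s * D = -N" by (simp add: square_eq_iff)
    then show "t = (N / D) / sqrt L"
    proof
      assume "t * s * D = N"
      then have "N = t * s * D" by simp
      then show ?thesis unfolding s_def[symmetric] using s(1) D by (simp add: field_simps)
    next
      assume n: "t * s * D = -N"
      then have NN: "N = - (t * s * D)" by simp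
      have "t * N * D = - (s * ((t * D) * (t * D)))" unfolding NN by (simp add: mult_ac)
      then have "s * ((t * D) * (t * D)) \<le> 0" using h by linarith
      then have "(t * D) * (t * D) \<le> 0" using s(1) by (simp add: mult_le_0_iff)
      then have "t * D = 0" by (metis mult_eq_0_iff not_square_less_zero order_antisym_conv zero_le_square)
      then have "t = 0" using D by simp
      moreover have "N = 0" using NN \<open>t = 0\<close> by simp
      ultimately show ?thesis by simp
    qed
  qed
qed

definition pc :: "piece \<Rightarrow> sfml" where
  "pc p = (case p of (\<phi>,N,D) \<Rightarrow> FAnd \<phi> (FAnd (FEq (PSub (Mul (Mul (Mul (Var 8) (Var 8)) Lp) (Mul D D)) (Mul N N)))
                                   (FGe (Mul (Mul (Var 8) N) D))))"

lemma part1: "semialgebraic_fun 8 Ord8"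
proof -
  obtain R where R: "rep Gterm R" using rep_ex by blast
  define \<Phi> where "\<Phi> = FOr (FAnd (FEq Lp) (FEq (Var 8))) (FAnd (FNot (FEq Lp)) (disj (map pc R)))"
  have eq: "xs ! 8 = Ord8 (take 8 xs) \<longleftrightarrow> fev \<Phi> xs" for xs
  proof -
    have "Ord8 (take 8 xs) = Ord8 xs" by (simp add: Ord8_def)
    then have o: "Ord8 (take 8 xs) = (if mpeval Lp xs = 0 then 0 else tev Gterm xs / sqrt (mpeval Lp xs))"
      by (simp add: Ord8_formula)
    have L0: "mpeval Lp xs \<ge> 0" by (simp add: Lp_def)
    show ?thesis
    proof (cases "mpeval Lp xs = 0")
      case True
      then show ?thesis using o by (simp add: \<Phi>_def)
    next
      case False
      then have Lpos: "mpeval Lp xs > 0" using L0 by simp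
      have "xs ! 8 = tev Gterm xs / sqrt (mpeval Lp xs) \<longleftrightarrow> (\<exists>p\<in>set R. fev (pc p) xs)"
      proof
        assume h: "xs ! 8 = tev Gterm xs / sqrt (mpeval Lp xs)"
        obtain \<phi> N D where p: "(\<phi>,N,D) \<in> set R" "fev \<phi> xs" using rep_cover[OF R] by blast
        note pp = rep_piece[OF R p]
        have "fev (pc (\<phi>,N,D)) xs"
          using h pp key_eq[OF Lpos, of "mpeval D xs" "xs ! 8" "mpeval N xs"] p(2) by (simp add: pc_def)
        then show "\<exists>p\<in>set R. fev (pc p) xs" using p(1) by blast
      next
        assume "\<exists>p\<in>set R. fev (pc p) xs"
        then obtain \<phi> N D where p: "(\<phi>,N,D) \<in> set R" "fev (pc (\<phi>,N,D)) xs" by (metis prod_cases3)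
        then have f: "fev \<phi> xs" by (simp add: pc_def)
        note pp = rep_piece[OF R p(1) f]
        show "xs ! 8 = tev Gterm xs / sqrt (mpeval Lp xs)"
          using p(2) pp key_eq[OF Lpos, of "mpeval D xs" "xs ! 8" "mpeval N xs"] by (simp add: pc_def)
      qed
      then show ?thesis using o False by (simp add: \<Phi>_def)
    qed
  qed
  have "{xs \<in> Rn (Suc 8). xs ! 8 = Ord8 (take 8 xs)} = {xs \<in> Rn (Suc 8). fev \<Phi> xs}"
    using eq by blast
  then show ?thesis unfolding semialgebraic_fun_def using sa_fml by simp
qed


theorem mainTheorem1:
  shows "semialgebraic_fun 8 Ord8
    \<and> continuous_on {(e1, e2). no_interior_intersection e1 e2} (\<lambda>(e1, e2). Ord e1 e2)
    \<and> (\<forall>(s1 :: nat \<Rightarrow> oseg) s2 e1 e2.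
           s1 \<longlonglongrightarrow> e1 \<longrightarrow> s2 \<longlonglongrightarrow> e2 \<longrightarrow>
           (\<forall>n. no_interior_intersection (s1 n) (s2 n)) \<longrightarrow>
           ((\<lambda>n. Ord (s1 n) (s2 n)) \<longlonglongrightarrow> Ord e1 e2 \<or>
            (\<forall>a. (\<exists>r. strict_mono r \<and> ((\<lambda>n. Ord (s1 n) (s2 n)) \<circ> r) \<longlonglongrightarrow> a)
                  \<longrightarrow> a = overlap_len e1 e2 \<or> a = - overlap_len e1 e2)))"
  using part1 part2 part3 by blast

end
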